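(* Let $X$, $A$, $B$, $C$, $\varepsilon$ be as in the context, and assume in addition that $A=A_0+\varepsilon$ where $A_0$ is a densely defined linear positive self-adjoint operator in $X$, and that $C=-\varepsilon$ (restricted to $D(A^{1/2})$). Let $T_\pm$ be the semigroups generated by $G_\pm$. Then $|T_\pm(t)|\leqslant e\,\varepsilon^{1/2}\,t\,\exp(\mu_Bt)$ for all $t\geqslant\varepsilon^{-1/2}$, where $\mu_B:=0$ if $B$ is symmetric and $\mu_B:=\|B\|$ if $B$ is bounded.
   Context: $(X,\langle\cdot|\cdot\rangle)$ is a nontrivial complex Hilbert space with norm $\|\cdot\|$. $A:D(A)\to X$ is a densely defined self-adjoint linear operator with $\langle\xi|A\xi\rangle\geqslant\varepsilon\langle\xi|\xi\rangle$ for all $\xi\in D(A)$ for some $\varepsilon>0$; $A^{1/2}$ is its positive self-adjoint square root. $B:D(A^{1/2})\to X$ is linear with $\|B\xi\|^2\leqslant a^2\|A^{1/2}\xi\|^2+b^2\|\xi\|^2$ for all $\xi\in D(A^{1/2})$, for some $a\in[0,1)$, $b\in\mathbb{R}$, and $B$ is symmetric or bounded. $Y:=D(A^{1/2})\times X$ with inner product $(\xi|\eta):=\langle A^{1/2}\xi_1|A^{1/2}\eta_1\rangle+\langle\xi_2|\eta_2\rangle$ and norm $|\cdot|$ (also for operator norms on $Y$). $H:D(A)\times D(A^{1/2})\to Y$, $H\xi:=(-i\xi_2,iA\xi_1)$; $\hat B:D(H)\to Y$, $\hat B\xi:=(0,-B\xi_2)$; $V:Y\to Y$, $V\xi:=(0,iC\xi_1)$;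 $G_+:=-i(H+\hat B+V)$, $G_-:=i(H+\hat B+V)$. $T_\pm$ is the strongly continuous semigroup with $T_\pm(t)=e^{-tG_\pm}$, $t\geqslant0$ (i.e. $\frac{d}{dt}T_\pm(t)\xi=-G_\pm T_\pm(t)\xi$ for $\xi\in D(H)$). *)

theory Defs
  imports "HOL-Analysis.Analysis"
begin

text \<open>A complex Hilbert space is given explicitly: a carrier type 'x (an abelian
group), a complex scalar multiplication sm, and an inner product ip which is
conjugate-linear in the first and linear in the second argument (bra-ket
convention as in the paper).\<close>

definition hnorm :: "('x \<Rightarrow> 'x \<Rightarrow> complex) \<Rightarrow> 'x \<Rightarrow> real" where
  "hnorm ip x = sqrt (Re (ip x x))"

definition complex_hilbert ::
  "(complex \<Rightarrow> 'x::ab_group_add \<Rightarrow> 'x) \<Rightarrow> ('x \<Rightarrow> 'x \<Rightarrow> complex) \<Rightarrow> bool" where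
  "complex_hilbert sm ip \<longleftrightarrow>
     (\<forall>a x y. sm a (x + y) = sm a x + sm a y) \<and>
     (\<forall>a b x. sm (a + b) x = sm a x + sm b x) \<and>
     (\<forall>a b x. sm a (sm b x) = sm (a * b) x) \<and>
     (\<forall>x. sm 1 x = x) \<and>
     (\<forall>x y z. ip x (y + z) = ip x y + ip x z) \<and>
     (\<forall>a x y. ip x (sm a y) = a * ip x y) \<and>
     (\<forall>x y. ip y x = cnj (ip x y)) \<and>
     (\<forall>x. 0 \<le> Re (ip x x)) \<and>
     (\<forall>x. ip x x = 0 \<longrightarrow> x = 0) \<and>
     (\<forall>s::nat \<Rightarrow> 'x. (\<forall>e>0. \<exists>N. \<forall>m\<ge>N. \<forall>n\<ge>N. hnorm ip (s m - s n) < e) \<longrightarrow>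
         (\<exists>l. \<forall>e>0. \<exists>N. \<forall>n\<ge>N. hnorm ip (s n - l) < e))"

definition lin_subspace :: "(complex \<Rightarrow> 'x::ab_group_add \<Rightarrow> 'x) \<Rightarrow> 'x set \<Rightarrow> bool" where
  "lin_subspace sm D \<longleftrightarrow> 0 \<in> D \<and> (\<forall>x\<in>D. \<forall>y\<in>D. x + y \<in> D) \<and> (\<forall>a. \<forall>x\<in>D. sm a x \<in> D)"

definition linear_op :: "(complex \<Rightarrow> 'x::ab_group_add \<Rightarrow> 'x) \<Rightarrow> 'x set \<Rightarrow> ('x \<Rightarrow> 'x) \<Rightarrow> bool" where
  "linear_op sm D f \<longleftrightarrow> lin_subspace sm D \<and>
     (\<forall>x\<in>D. \<forall>y\<in>D. f (x + y) = f x + f y) \<and> (\<forall>a. \<forall>x\<in>D. f (sm a x) = sm a (f x))"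

definition dense_in :: "('x \<Rightarrow> 'x \<Rightarrow> complex) \<Rightarrow> 'x::ab_group_add set \<Rightarrow> bool" where
  "dense_in ip D \<longleftrightarrow> (\<forall>x. \<forall>e>0. \<exists>y\<in>D. hnorm ip (x - y) < e)"

definition adj_dom :: "('x \<Rightarrow> 'x \<Rightarrow> complex) \<Rightarrow> 'x set \<Rightarrow> ('x \<Rightarrow> 'x) \<Rightarrow> 'x set" where
  "adj_dom ip D f = {\<eta>. \<exists>\<zeta>. \<forall>\<xi>\<in>D. ip \<eta> (f \<xi>) = ip \<zeta> \<xi>}"

definition self_adjoint ::
  "(complex \<Rightarrow> 'x::ab_group_add \<Rightarrow> 'x) \<Rightarrow> ('x \<Rightarrow> 'x \<Rightarrow> complex) \<Rightarrow> 'x set \<Rightarrow> ('x \<Rightarrow> 'x) \<Rightarrow> bool" where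
  "self_adjoint sm ip D f \<longleftrightarrow> linear_op sm D f \<and> dense_in ip D \<and>
     adj_dom ip D f = D \<and> (\<forall>\<xi>\<in>D. \<forall>\<eta>\<in>D. ip \<eta> (f \<xi>) = ip (f \<eta>) \<xi>)"

definition positive_op :: "('x \<Rightarrow> 'x \<Rightarrow> complex) \<Rightarrow> 'x set \<Rightarrow> ('x \<Rightarrow> 'x) \<Rightarrow> bool" where
  "positive_op ip D f \<longleftrightarrow> (\<forall>\<xi>\<in>D. ip \<xi> (f \<xi>) \<in> \<real> \<and> 0 \<le> Re (ip \<xi> (f \<xi>)))"

text \<open>(DS, S) is the positive self-adjoint square root of (DA, A).  By uniqueness of
the positive square root this determines A^(1/2).\<close>
definition is_pos_sqrt ::
  "(complex \<Rightarrow> 'x::ab_group_add \<Rightarrow> 'x) \<Rightarrow> ('x \<Rightarrow> 'x \<Rightarrow> complex) \<Rightarrow> 'x set \<Rightarrow> ('x \<Rightarrow> 'x)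
     \<Rightarrow> 'x set \<Rightarrow> ('x \<Rightarrow> 'x) \<Rightarrow> bool" where
  "is_pos_sqrt sm ip DS S DA A \<longleftrightarrow> self_adjoint sm ip DS S \<and> positive_op ip DS S \<and>
     DA = {\<xi>\<in>DS. S \<xi> \<in> DS} \<and> (\<forall>\<xi>\<in>DA. S (S \<xi>) = A \<xi>)"

definition symmetric_on :: "('x \<Rightarrow> 'x \<Rightarrow> complex) \<Rightarrow> 'x set \<Rightarrow> ('x \<Rightarrow> 'x) \<Rightarrow> bool" where
  "symmetric_on ip D B \<longleftrightarrow> (\<forall>\<xi>\<in>D. \<forall>\<eta>\<in>D. ip (B \<xi>) \<eta> = ip \<xi> (B \<eta>))"

definition bounded_on :: "('x \<Rightarrow> 'x \<Rightarrow> complex) \<Rightarrow> 'x set \<Rightarrow> ('x \<Rightarrow> 'x) \<Rightarrow> bool" where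
  "bounded_on ip D B \<longleftrightarrow> (\<exists>M. \<forall>\<xi>\<in>D. hnorm ip (B \<xi>) \<le> M * hnorm ip \<xi>)"

definition op_norm :: "('x \<Rightarrow> 'x \<Rightarrow> complex) \<Rightarrow> 'x set \<Rightarrow> ('x \<Rightarrow> 'x) \<Rightarrow> real" where
  "op_norm ip D B = Sup {hnorm ip (B \<xi>) | \<xi>. \<xi> \<in> D \<and> hnorm ip \<xi> \<le> 1}"

text \<open>The energy space Y = D(A^(1/2)) \<times> X with its norm.\<close>
definition Yset :: "'x set \<Rightarrow> ('x \<times> 'x) set" where
  "Yset DS = DS \<times> UNIV"

definition Ynorm :: "('x \<Rightarrow> 'x \<Rightarrow> complex) \<Rightarrow> ('x \<Rightarrow> 'x) \<Rightarrow> 'x \<times> 'x \<Rightarrow> real" where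
  "Ynorm ip S \<xi> = sqrt ((hnorm ip (S (fst \<xi>)))\<^sup>2 + (hnorm ip (snd \<xi>))\<^sup>2)"

definition Ysm :: "(complex \<Rightarrow> 'x \<Rightarrow> 'x) \<Rightarrow> complex \<Rightarrow> 'x \<times> 'x \<Rightarrow> 'x \<times> 'x" where
  "Ysm sm c \<xi> = (sm c (fst \<xi>), sm c (snd \<xi>))"

text \<open>H, \<hat>B, V and G_+ = -i(H + \<hat>B + V), G_- = i(H + \<hat>B + V), as maps on pairs
(meaningful on D(H) = D(A) \<times> D(A^(1/2))).\<close>
definition Hop :: "(complex \<Rightarrow> 'x \<Rightarrow> 'x) \<Rightarrow> ('x \<Rightarrow> 'x) \<Rightarrow> 'x \<times> 'x \<Rightarrow> 'x \<times> 'x" where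
  "Hop sm A \<xi> = (sm (- \<i>) (snd \<xi>), sm \<i> (A (fst \<xi>)))"

definition Bhat :: "('x::ab_group_add \<Rightarrow> 'x) \<Rightarrow> 'x \<times> 'x \<Rightarrow> 'x \<times> 'x" where
  "Bhat B \<xi> = (0, - B (snd \<xi>))"

definition Vop :: "(complex \<Rightarrow> 'x::ab_group_add \<Rightarrow> 'x) \<Rightarrow> ('x \<Rightarrow> 'x) \<Rightarrow> 'x \<times> 'x \<Rightarrow> 'x \<times> 'x" where
  "Vop sm C \<xi> = (0, sm \<i> (C (fst \<xi>)))"

definition Gop :: "(complex \<Rightarrow> 'x::ab_group_add \<Rightarrow> 'x) \<Rightarrow> complex \<Rightarrow> ('x \<Rightarrow> 'x) \<Rightarrow> ('x \<Rightarrow> 'x)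
     \<Rightarrow> ('x \<Rightarrow> 'x) \<Rightarrow> 'x \<times> 'x \<Rightarrow> 'x \<times> 'x" where
  "Gop sm c A B C \<xi> = Ysm sm c (Hop sm A \<xi> + Bhat B \<xi> + Vop sm C \<xi>)"

text \<open>T is the strongly continuous semigroup on Y (norm Ynorm) whose generator is
exactly -G with domain DG, i.e. T(t) = exp(-tG).\<close>
definition C0_semigroup_gen ::
  "(complex \<Rightarrow> 'x::ab_group_add \<Rightarrow> 'x) \<Rightarrow> ('x \<Rightarrow> 'x \<Rightarrow> complex) \<Rightarrow> 'x set \<Rightarrow> ('x \<Rightarrow> 'x)
     \<Rightarrow> ('x \<times> 'x) set \<Rightarrow> ('x \<times> 'x \<Rightarrow> 'x \<times> 'x) \<Rightarrow> (real \<Rightarrow> 'x \<times> 'x \<Rightarrow> 'x \<times> 'x) \<Rightarrow> bool" where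
  "C0_semigroup_gen sm ip DS S DG G T \<longleftrightarrow>
     (\<forall>t\<ge>0. \<forall>\<xi>\<in>Yset DS. T t \<xi> \<in> Yset DS) \<and>
     (\<forall>t\<ge>0. \<forall>\<xi>\<in>Yset DS. \<forall>\<eta>\<in>Yset DS. T t (\<xi> + \<eta>) = T t \<xi> + T t \<eta>) \<and>
     (\<forall>t\<ge>0. \<forall>c. \<forall>\<xi>\<in>Yset DS. T t (Ysm sm c \<xi>) = Ysm sm c (T t \<xi>)) \<and>
     (\<forall>t\<ge>0. \<exists>M. \<forall>\<xi>\<in>Yset DS. Ynorm ip S (T t \<xi>) \<le> M * Ynorm ip S \<xi>) \<and>
     (\<forall>\<xi>\<in>Yset DS. T 0 \<xi> = \<xi>) \<and>
     (\<forall>s\<ge>0. \<forall>t\<ge>0. \<forall>\<xi>\<in>Yset DS. T (s + t) \<xi> = T s (T t \<xi>)) \<and>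
     (\<forall>\<xi>\<in>Yset DS. \<forall>t\<ge>0. \<forall>e>0. \<exists>\<delta>>0. \<forall>s\<ge>0. \<bar>s - t\<bar> < \<delta> \<longrightarrow>
         Ynorm ip S (T s \<xi> - T t \<xi>) < e) \<and>
     (\<forall>\<xi>\<in>Yset DS.
        (\<xi> \<in> DG \<longleftrightarrow> (\<exists>L\<in>Yset DS. \<forall>e>0. \<exists>\<delta>>0. \<forall>h. 0 < h \<and> h < \<delta> \<longrightarrow>
            Ynorm ip S (Ysm sm (complex_of_real (1 / h)) (T h \<xi> - \<xi>) - L) < e)) \<and>
        (\<xi> \<in> DG \<longrightarrow> (\<forall>e>0. \<exists>\<delta>>0. \<forall>h. 0 < h \<and> h < \<delta> \<longrightarrow>
            Ynorm ip S (Ysm sm (complex_of_real (1 / h)) (T h \<xi> - \<xi>) - (- G \<xi>)) < e)))"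

end

theory Submission
  imports Defs
begin

locale vs =
  fixes sm :: "complex \<Rightarrow> 'x::ab_group_add \<Rightarrow> 'x"
  assumes sm_add_right: "sm a (x + y) = sm a x + sm a y"
  and sm_add_left: "sm (a + b) x = sm a x + sm b x"
  and sm_assoc: "sm a (sm b x) = sm (a * b) x"
  and sm_one: "sm 1 x = x"
begin

lemma sm_zero_left[simp]: "sm 0 x = 0"
proof -
  have "sm (0+0) x = sm 0 x + sm 0 x" by (rule sm_add_left)
  then show ?thesis by simp
qed

lemma sm_zero_right[simp]: "sm a 0 = 0"
proof -
  have "sm a (0+0) = sm a 0 + sm a 0" by (rule sm_add_right)
  then show ?thesis by simp
qed

lemma sm_minus_right: "sm a (- x) = - sm a x"
proof -
  have "sm a (- x) + sm a x = sm a (- x + x)" by (rule sm_add_right[symmetric])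
  then have "sm a (- x) + sm a x = 0" by simp
  then show ?thesis by (simp add: eq_neg_iff_add_eq_0)
qed

lemma sm_minus_left: "sm (- a) x = - sm a x"
proof -
  have "sm (- a) x + sm a x = sm (- a + a) x" by (rule sm_add_left[symmetric])
  then have "sm (- a) x + sm a x = 0" by simp
  then show ?thesis by (simp add: eq_neg_iff_add_eq_0)
qed

lemma sm_diff_right: "sm a (x - y) = sm a x - sm a y"
  unfolding diff_conv_add_uminus by (simp only: sm_add_right sm_minus_right)

lemma sm_diff_left: "sm (a - b) x = sm a x - sm b x"
  unfolding diff_conv_add_uminus by (simp only: sm_add_left sm_minus_left)

lemma sm_minus_one: "sm (-1) x = - x"
  by (simp add: sm_minus_left sm_one)

lemma sub_zero: "lin_subspace sm D \<Longrightarrow> 0 \<in> D"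
  by (simp add: lin_subspace_def)
lemma sub_add: "lin_subspace sm D \<Longrightarrow> x \<in> D \<Longrightarrow> y \<in> D \<Longrightarrow> x + y \<in> D"
  by (simp add: lin_subspace_def)
lemma sub_sm: "lin_subspace sm D \<Longrightarrow> x \<in> D \<Longrightarrow> sm a x \<in> D"
  by (simp add: lin_subspace_def)
lemma sub_minus: "lin_subspace sm D \<Longrightarrow> x \<in> D \<Longrightarrow> - x \<in> D"
  by (metis sm_minus_one sub_sm)
lemma sub_diff: "lin_subspace sm D \<Longrightarrow> x \<in> D \<Longrightarrow> y \<in> D \<Longrightarrow> x - y \<in> D"
  unfolding diff_conv_add_uminus by (intro sub_add sub_minus)

lemma lin_sub: "linear_op sm D f \<Longrightarrow> lin_subspace sm D"
  by (simp add: linear_op_def)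
lemma lin_zero: "linear_op sm D f \<Longrightarrow> f 0 = 0"
proof -
  assume l: "linear_op sm D f"
  then have "0 \<in> D" by (simp add: linear_op_def sub_zero)
  then have "f (sm 0 0) = sm 0 (f 0)" using l unfolding linear_op_def by blast
  then show ?thesis by simp
qed
lemma lin_add: "linear_op sm D f \<Longrightarrow> x \<in> D \<Longrightarrow> y \<in> D \<Longrightarrow> f (x + y) = f x + f y"
  by (simp add: linear_op_def)
lemma lin_sm: "linear_op sm D f \<Longrightarrow> x \<in> D \<Longrightarrow> f (sm a x) = sm a (f x)"
  by (simp add: linear_op_def)
lemma lin_minus: "linear_op sm D f \<Longrightarrow> x \<in> D \<Longrightarrow> f (- x) = - f x"
  by (metis lin_sm sm_minus_one)
lemma lin_diff: "linear_op sm D f \<Longrightarrow> x \<in> D \<Longrightarrow> y \<in> D \<Longrightarrow> f (x - y) = f x - f y"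
proof -
  assume l: "linear_op sm D f" and x: "x \<in> D" and y: "y \<in> D"
  have "- y \<in> D" using l y lin_sub sub_minus by blast
  then have "f (x + - y) = f x + f (- y)" using l x lin_add by blast
  then show ?thesis using l y lin_minus unfolding diff_conv_add_uminus by simp
qed

end

locale phs = vs sm for sm :: "complex \<Rightarrow> 'x::ab_group_add \<Rightarrow> 'x" +
  fixes D :: "'x set" and q :: "'x \<Rightarrow> 'x \<Rightarrow> complex"
  assumes D_sub: "lin_subspace sm D"
  and q_add: "x\<in>D \<Longrightarrow> y\<in>D \<Longrightarrow> z\<in>D \<Longrightarrow> q x (y + z) = q x y + q x z"
  and q_sm: "x\<in>D \<Longrightarrow> y\<in>D \<Longrightarrow> q x (sm a y) = a * q x y"
  and q_herm: "x\<in>D \<Longrightarrow> y\<in>D \<Longrightarrow> q y x = cnj (q x y)"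
  and q_pos: "x\<in>D \<Longrightarrow> 0 \<le> Re (q x x)"
  and q_def: "x\<in>D \<Longrightarrow> q x x = 0 \<Longrightarrow> x = 0"
  and q_complete: "(\<forall>n::nat. s n \<in> D) \<Longrightarrow> (\<forall>e>0. \<exists>N. \<forall>m\<ge>N. \<forall>n\<ge>N. hnorm q (s m - s n) < e)
      \<Longrightarrow> \<exists>l\<in>D. \<forall>e>0. \<exists>N. \<forall>n\<ge>N. hnorm q (s n - l) < e"
begin

abbreviation "nq \<equiv> hnorm q"

lemma D0[simp]: "0 \<in> D" using D_sub sub_zero by blast
lemma Dadd[simp]: "x \<in> D \<Longrightarrow> y \<in> D \<Longrightarrow> x + y \<in> D" using D_sub sub_add by blast
lemma Dsm[simp]: "x \<in> D \<Longrightarrow> sm a x \<in> D" using D_sub sub_sm by blast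
lemma Dminus[simp]: "x \<in> D \<Longrightarrow> - x \<in> D" using D_sub sub_minus by blast
lemma Ddiff[simp]: "x \<in> D \<Longrightarrow> y \<in> D \<Longrightarrow> x - y \<in> D" using D_sub sub_diff by blast

lemma q_zero_right[simp]: "x \<in> D \<Longrightarrow> q x 0 = 0"
  using q_sm[of x 0 0] by simp
lemma q_zero_left[simp]: "x \<in> D \<Longrightarrow> q 0 x = 0"
  using q_herm[of x 0] by simp
lemma q_add_left: "x\<in>D \<Longrightarrow> y\<in>D \<Longrightarrow> z\<in>D \<Longrightarrow> q (x + y) z = q x z + q y z"
  by (metis Dadd complex_cnj_add q_add q_herm)
lemma q_sm_left: "x\<in>D \<Longrightarrow> y\<in>D \<Longrightarrow> q (sm a x) y = cnj a * q x y"
  by (metis Dsm complex_cnj_mult q_herm q_sm)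
lemma q_minus_right: "x\<in>D \<Longrightarrow> y\<in>D \<Longrightarrow> q x (- y) = - q x y"
  by (metis q_sm sm_minus_one mult_minus1)
lemma q_minus_left: "x\<in>D \<Longrightarrow> y\<in>D \<Longrightarrow> q (- x) y = - q x y"
  using q_sm_left[of x y "-1"] by (simp add: sm_minus_one)
lemma q_diff_right: "x\<in>D \<Longrightarrow> y\<in>D \<Longrightarrow> z\<in>D \<Longrightarrow> q x (y - z) = q x y - q x z"
proof -
  assume x: "x\<in>D" and y: "y\<in>D" and z: "z\<in>D"
  have "q x (y + - z) = q x y + q x (- z)" by (rule q_add) (use x y z in auto)
  then show ?thesis using x z by (simp add: q_minus_right)
qed
lemma q_diff_left: "x\<in>D \<Longrightarrow> y\<in>D \<Longrightarrow> z\<in>D \<Longrightarrow> q (x - y) z = q x z - q y z"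
proof -
  assume x: "x\<in>D" and y: "y\<in>D" and z: "z\<in>D"
  have "q (x + - y) z = q x z + q (- y) z" by (rule q_add_left) (use x y z in auto)
  then show ?thesis using y z by (simp add: q_minus_left)
qed

lemma q_self_real: "x \<in> D \<Longrightarrow> Im (q x x) = 0"
proof -
  assume x: "x \<in> D"
  have "Im (q x x) = Im (cnj (q x x))" using q_herm[OF x x] by simp
  then show ?thesis by simp
qed

lemma q_self: "x \<in> D \<Longrightarrow> q x x = complex_of_real (Re (q x x))"
  using q_self_real by (simp add: complex_eq_iff)

lemma nq_sq: "x \<in> D \<Longrightarrow> (nq x)^2 = Re (q x x)"
  by (simp add: hnorm_def q_pos)

lemma nq_nonneg: "x \<in> D \<Longrightarrow> 0 \<le> nq x"
proof -
  assume "x \<in> D"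
  then have "0 \<le> Re (q x x)" by (rule q_pos)
  then show ?thesis unfolding hnorm_def by simp
qed

lemma nq_zero[simp]: "nq 0 = 0"
  by (simp add: hnorm_def)

lemma nq_eq0: "x \<in> D \<Longrightarrow> nq x = 0 \<longleftrightarrow> x = 0"
proof -
  assume x: "x \<in> D"
  have "nq x = 0 \<longleftrightarrow> Re (q x x) = 0" unfolding hnorm_def by simp
  also have "\<dots> \<longleftrightarrow> q x x = 0" using q_self[OF x] by (metis of_real_0 zero_complex.sel(1))
  also have "\<dots> \<longleftrightarrow> x = 0" using q_def[OF x] x by auto
  finally show ?thesis .
qed

lemma expand: "x\<in>D \<Longrightarrow> y\<in>D \<Longrightarrow>
   Re (q (x + sm a y) (x + sm a y)) = Re (q x x) + 2 * Re (a * q x y) + (cmod a)^2 * Re (q y y)"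
proof -
  assume x: "x\<in>D" and y: "y\<in>D"
  have say: "sm a y \<in> D" using y by simp
  have "q (x + sm a y) (x + sm a y) = q x (x + sm a y) + q (sm a y) (x + sm a y)"
    using q_add_left[OF x say] x say by simp
  also have "\<dots> = (q x x + q x (sm a y)) + (q (sm a y) x + q (sm a y) (sm a y))"
    using q_add[OF x x say] q_add[OF say x say] by simp
  also have "q x (sm a y) = a * q x y" using q_sm[OF x y] .
  also have "q (sm a y) x = cnj a * q y x" using q_sm_left[OF y x] .
  also have "q (sm a y) (sm a y) = cnj a * (a * q y y)" using q_sm_left[OF y say] q_sm[OF y y] by simp
  finally have "q (x + sm a y) (x + sm a y) = q x x + a * q x y + cnj a * q y x + cnj a * a * q y y"
    by (simp add: mult.assoc)
  also have "cnj a * q y x = cnj (a * q x y)" by (simp add: q_herm[OF x y])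
  finally have "Re (q (x + sm a y) (x + sm a y)) = Re (q x x) + Re (a * q x y) + Re (cnj (a * q x y)) + Re (cnj a * a * q y y)"
    by simp
  moreover have "Re (cnj a * a * q y y) = (cmod a)^2 * Re (q y y)"
  proof -
    have "cnj a * a = complex_of_real ((cmod a)^2)" by (metis complex_norm_square mult.commute of_real_power)
    have "Re (cnj a * a * q y y) = Re (complex_of_real ((cmod a)^2) * complex_of_real (Re (q y y)))"
      by (subst q_self[OF y]) (simp only: \<open>cnj a * a = _\<close>)
    then show ?thesis by simp
  qed
  ultimately show ?thesis by simp
qed

lemma expand_add: "x\<in>D \<Longrightarrow> y\<in>D \<Longrightarrow>
   Re (q (x + y) (x + y)) = Re (q x x) + 2 * Re (q x y) + Re (q y y)"
  using expand[of x y 1] by (simp add: sm_one)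

lemma expand_diff: "x\<in>D \<Longrightarrow> y\<in>D \<Longrightarrow>
   Re (q (x - y) (x - y)) = Re (q x x) - 2 * Re (q x y) + Re (q y y)"
proof -
  assume x: "x\<in>D" and y: "y\<in>D"
  have e: "x + sm (-1) y = x - y" by (simp add: sm_minus_one)
  show ?thesis using expand[OF x y, of "-1"] unfolding e by simp
qed

lemma CS_sq: assumes x: "x\<in>D" and y: "y\<in>D"
  shows "(cmod (q x y))^2 \<le> Re (q x x) * Re (q y y)"
proof (cases "x = 0")
  case True then show ?thesis using y by simp
next
  case False
  define Qx where "Qx = Re (q x x)"
  define Qy where "Qy = Re (q y y)"
  define W where "W = (cmod (q x y))^2"
  have "nq x \<noteq> 0" using nq_eq0[OF x] False by simp
  then have "Qx \<noteq> 0" unfolding Qx_def hnorm_def by auto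
  then have Qx: "Qx > 0" using q_pos[OF x] unfolding Qx_def by simp
  define t where "t = 1 / Qx"
  define a where "a = - complex_of_real t * q x y"
  have "0 \<le> Re (q (y + sm a x) (y + sm a x))" using q_pos x y by simp
  also have "\<dots> = Qy + 2 * Re (a * q y x) + (cmod a)^2 * Qx"
    using expand[OF y x, of a] unfolding Qx_def Qy_def by simp
  also have "a * q y x = - complex_of_real (t * W)"
  proof -
    have "q y x = cnj (q x y)" using q_herm[OF x y] .
    then have "a * q y x = - complex_of_real t * (q x y * cnj (q x y))" unfolding a_def by simp
    also have "q x y * cnj (q x y) = complex_of_real W" unfolding W_def by (metis complex_norm_square of_real_power)
    finally show ?thesis by simp
  qed
  also have "(cmod a)^2 = t^2 * W" unfolding a_def W_def
    by (simp add: norm_mult power_mult_distrib)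
  finally have "0 \<le> Qy + 2 * (- (t * W)) + t^2 * W * Qx" by simp
  also have "t^2 * W * Qx = W / Qx" unfolding t_def using Qx by (simp add: power2_eq_square)
  also have "2 * (- (t * W)) = - 2 * W / Qx" unfolding t_def by simp
  finally have "0 \<le> Qy - W / Qx" by simp
  then have "W / Qx \<le> Qy" by simp
  then have "W \<le> Qy * Qx" using Qx by (simp add: divide_le_eq)
  then show ?thesis unfolding W_def Qx_def Qy_def by (simp add: mult.commute)
qed

lemma CS: assumes x: "x\<in>D" and y: "y\<in>D"
  shows "cmod (q x y) \<le> nq x * nq y"
proof -
  have "(cmod (q x y))^2 \<le> (nq x * nq y)^2"
    using CS_sq[OF x y] nq_sq[OF x] nq_sq[OF y] by (simp add: power_mult_distrib)
  then show ?thesis using power2_le_imp_le mult_nonneg_nonneg[OF nq_nonneg[OF x] nq_nonneg[OF y]] by blast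
qed

lemma Re_le: "x\<in>D \<Longrightarrow> y\<in>D \<Longrightarrow> \<bar>Re (q x y)\<bar> \<le> nq x * nq y"
  using CS abs_Re_le_cmod order_trans by blast

lemma tri: assumes x: "x\<in>D" and y: "y\<in>D"
  shows "nq (x + y) \<le> nq x + nq y"
proof -
  have "(nq (x + y))^2 = (nq x)^2 + 2 * Re (q x y) + (nq y)^2"
    using expand_add[OF x y] nq_sq x y by simp
  also have "\<dots> \<le> (nq x + nq y)^2" using Re_le[OF x y] by (simp add: power2_sum)
  finally show ?thesis using power2_le_imp_le add_nonneg_nonneg[OF nq_nonneg[OF x] nq_nonneg[OF y]] by blast
qed

lemma nq_sm: "x\<in>D \<Longrightarrow> nq (sm a x) = cmod a * nq x"
proof -
  assume x: "x\<in>D"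
  have "Re (q (sm a x) (sm a x)) = (cmod a)^2 * Re (q x x)"
    using expand[OF D0 x, of a] x by simp
  then show ?thesis unfolding hnorm_def by (simp add: real_sqrt_mult)
qed

lemma nq_minus: "x\<in>D \<Longrightarrow> nq (- x) = nq x"
  using nq_sm[of x "-1"] by (simp add: sm_minus_one)

lemma nq_commute: "x\<in>D \<Longrightarrow> y\<in>D \<Longrightarrow> nq (x - y) = nq (y - x)"
  by (metis Ddiff minus_diff_eq nq_minus)

lemma tri_diff: "x\<in>D \<Longrightarrow> y\<in>D \<Longrightarrow> z\<in>D \<Longrightarrow> nq (x - z) \<le> nq (x - y) + nq (y - z)"
proof -
  assume x: "x\<in>D" and y: "y\<in>D" and z: "z\<in>D"
  have "x - z = (x - y) + (y - z)" by simp
  then show ?thesis using tri[of "x - y" "y - z"] x y z by simp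
qed

lemma rev_tri: "x\<in>D \<Longrightarrow> y\<in>D \<Longrightarrow> \<bar>nq x - nq y\<bar> \<le> nq (x - y)"
proof -
  assume x: "x\<in>D" and y: "y\<in>D"
  have "nq x \<le> nq (x - y) + nq y" using tri[of "x - y" y] x y by simp
  moreover have "nq y \<le> nq (y - x) + nq x" using tri[of "y - x" x] x y by simp
  moreover have "nq (y - x) = nq (x - y)" using nq_commute x y by simp
  ultimately show ?thesis by linarith
qed

end


context phs
begin

lemma sm_two: "sm 2 x = x + x"
proof -
  have "sm (1 + 1) x = sm 1 x + sm 1 x" by (rule sm_add_left)
  then show ?thesis by (simp add: sm_one)
qed

lemma parallelogram: assumes a: "a\<in>D" and b: "b\<in>D"
  shows "(nq (a + b))^2 + (nq (a - b))^2 = 2 * (nq a)^2 + 2 * (nq b)^2"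
  using expand_add[OF a b] expand_diff[OF a b] nq_sq a b by simp

lemma dense_orth:
  assumes M: "lin_subspace sm M" "M \<subseteq> D"
  and orth: "\<forall>w\<in>D. (\<forall>m\<in>M. q w m = 0) \<longrightarrow> w = 0"
  and x: "x \<in> D" and e: "e > 0"
  shows "\<exists>m\<in>M. nq (x - m) < e"
proof -
  have MD: "m \<in> M \<Longrightarrow> m \<in> D" for m using M by auto
  have M0: "0 \<in> M" using M(1) sub_zero by blast
  have Madd: "m \<in> M \<Longrightarrow> m' \<in> M \<Longrightarrow> m + m' \<in> M" for m m' using M(1) sub_add by blast
  have Mdiff: "m \<in> M \<Longrightarrow> m' \<in> M \<Longrightarrow> m - m' \<in> M" for m m' using M(1) sub_diff by blast
  have Msm: "m \<in> M \<Longrightarrow> sm a m \<in> M" for m a using M(1) sub_sm by blast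
  define F where "F = (\<lambda>m. nq (x - m)) ` M"
  define d where "d = Inf F"
  have bdd: "bdd_below F" unfolding F_def
    by (rule bdd_belowI[of _ 0]) (use x MD nq_nonneg in auto)
  have ne: "F \<noteq> {}" unfolding F_def using M0 by auto
  have d_le: "m \<in> M \<Longrightarrow> d \<le> nq (x - m)" for m
    unfolding d_def F_def by (rule cInf_lower) (use bdd F_def in auto)
  have d_nonneg: "0 \<le> d" unfolding d_def
    by (rule cInf_greatest[OF ne]) (use x MD nq_nonneg F_def in auto)
  have ex: "\<forall>n::nat. \<exists>m. m \<in> M \<and> (nq (x - m))^2 < d^2 + 1 / (real n + 1)"
  proof
    fix n :: nat
    have "d < sqrt (d^2 + 1 / (real n + 1))"
      by (rule real_less_rsqrt) (simp add: add_pos_pos)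
    then obtain y where "y \<in> F" "y < sqrt (d^2 + 1 / (real n + 1))"
      using cInf_lessD[OF ne] unfolding d_def by blast
    then obtain m where m: "m \<in> M" "nq (x - m) < sqrt (d^2 + 1 / (real n + 1))"
      unfolding F_def by blast
    have "(nq (x - m))^2 < d^2 + 1 / (real n + 1)"
    proof -
      have h: "0 \<le> nq (x - m)" using nq_nonneg x MD[OF m(1)] by simp
      have "(nq (x - m))^2 < (sqrt (d^2 + 1 / (real n + 1)))^2"
        by (rule power_strict_mono[OF m(2) h]) simp
      also have "(sqrt (d^2 + 1 / (real n + 1)))^2 = d^2 + 1 / (real n + 1)"
        by (simp add: add_nonneg_nonneg)
      finally show ?thesis .
    qed
    then show "\<exists>m. m \<in> M \<and> (nq (x - m))^2 < d^2 + 1 / (real n + 1)" using m(1) by blast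
  qed
  then obtain ms where "\<forall>n. ms n \<in> M \<and> (nq (x - ms n))^2 < d^2 + 1 / (real n + 1)"
    using choice[OF ex] by blast
  then have ms: "\<And>n. ms n \<in> M" "\<And>n. (nq (x - ms n))^2 < d^2 + 1 / (real n + 1)"
    by blast+
  have msD: "ms n \<in> D" for n using MD ms(1) by blast
  have par: "(nq (ms j - ms k))^2 \<le> 2 / (real j + 1) + 2 / (real k + 1)" for j k
  proof -
    define a where "a = x - ms j"
    define b where "b = x - ms k"
    have aD: "a \<in> D" and bD: "b \<in> D" unfolding a_def b_def using x msD by auto
    define mid where "mid = sm (1/2) (ms j + ms k)"
    have mid: "mid \<in> M" unfolding mid_def using ms(1) Madd Msm by blast
    have "a + b = sm 2 (x - mid)"
    proof -
      have "sm 2 (x - mid) = sm 2 x - sm 2 mid" by (rule sm_diff_right)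
      also have "sm 2 mid = ms j + ms k" unfolding mid_def by (simp add: sm_assoc sm_one)
      finally show ?thesis unfolding a_def b_def by (simp add: sm_two)
    qed
    then have "nq (a + b) = 2 * nq (x - mid)" using nq_sm[of "x - mid" 2] x MD[OF mid] by simp
    then have ab: "(nq (a + b))^2 = 4 * (nq (x - mid))^2" by (simp add: power2_eq_square)
    have "d \<le> nq (x - mid)" using d_le[OF mid] .
    then have "d^2 \<le> (nq (x - mid))^2" using d_nonneg by (simp add: power_mono)
    moreover have "a - b = ms k - ms j" unfolding a_def b_def by simp
    moreover have "nq (ms k - ms j) = nq (ms j - ms k)" using nq_commute msD by blast
    ultimately have nab: "nq (a - b) = nq (ms j - ms k)" "d^2 \<le> (nq (x - mid))^2" by simp_all
    have "(nq (ms j - ms k))^2 \<le> 2 * (nq a)^2 + 2 * (nq b)^2 - 4 * d^2"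
    proof -
      have "(nq (a + b))^2 + (nq (ms j - ms k))^2 = 2 * (nq a)^2 + 2 * (nq b)^2"
        using parallelogram[OF aD bD] nab(1) by simp
      then show ?thesis using ab nab(2) by linarith
    qed
    also have "\<dots> \<le> 2 * (d^2 + 1 / (real j + 1)) + 2 * (d^2 + 1 / (real k + 1)) - 4 * d^2"
      using ms(2)[of j] ms(2)[of k] unfolding a_def b_def by (smt (verit))
    finally show ?thesis by simp
  qed
  have cauchy: "\<forall>e>0. \<exists>N. \<forall>m\<ge>N. \<forall>n\<ge>N. nq (ms m - ms n) < e"
  proof (intro allI impI)
    fix e :: real assume e: "e > 0"
    obtain N :: nat where N: "4 / e^2 < real N" using reals_Archimedean2 by blast
    have "4 / (real N + 1) < e^2"
    proof -
      have "4 < e^2 * real N" using N e by (simp add: divide_less_eq mult.commute)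
      moreover have "e^2 * real N \<le> e^2 * (real N + 1)" by (simp add: distrib_left)
      ultimately have "4 < e^2 * (real N + 1)" by linarith
      then show ?thesis by (simp add: divide_less_eq mult.commute)
    qed
    show "\<exists>N. \<forall>m\<ge>N. \<forall>n\<ge>N. nq (ms m - ms n) < e"
    proof (intro exI allI impI)
      fix j k assume j: "N \<le> j" and k: "N \<le> k"
      have "2 / (real j + 1) \<le> 2 / (real N + 1)" using j by (simp add: frac_le)
      moreover have "2 / (real k + 1) \<le> 2 / (real N + 1)" using k by (simp add: frac_le)
      ultimately have "(nq (ms j - ms k))^2 < e^2" using par[of j k] \<open>4 / (real N + 1) < e^2\<close> by simp
      then show "nq (ms j - ms k) < e" using e by (simp add: power_less_imp_less_base)
    qed
  qed
  obtain p where pD: "p \<in> D" and conv: "\<forall>e>0. \<exists>N. \<forall>n\<ge>N. nq (ms n - p) < e"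
    using q_complete[of ms] msD cauchy by blast
  define z where "z = x - p"
  have zD: "z \<in> D" unfolding z_def using x pD by simp
  have z_le: "nq z \<le> d"
  proof (rule field_le_epsilon)
    fix e :: real assume e: "0 < e"
    obtain N1 where N1: "\<forall>n\<ge>N1. nq (ms n - p) < e/2" using conv e by (meson half_gt_zero)
    obtain N2 :: nat where N2: "4 / e^2 < real N2" using reals_Archimedean2 by blast
    define n where "n = max N1 N2"
    have n1: "nq (ms n - p) < e/2" using N1 n_def by simp
    have "1 / (real n + 1) < (e/2)^2"
    proof -
      have "4 / e^2 < real n + 1" using N2 n_def by simp
      then have "4 < e^2 * (real n + 1)" using e by (simp add: divide_less_eq mult.commute)
      then show ?thesis by (simp add: divide_less_eq power_divide mult.commute)
    qed
    then have "(nq (x - ms n))^2 < d^2 + (e/2)^2" using ms(2)[of n] by linarith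
    also have "\<dots> \<le> (d + e/2)^2" using d_nonneg e by (simp add: power2_sum)
    finally have "nq (x - ms n) < d + e/2"
      by (rule power_less_imp_less_base) (use d_nonneg e in simp)
    moreover have "nq z \<le> nq (x - ms n) + nq (ms n - p)"
      unfolding z_def by (rule tri_diff[OF x msD pD])
    ultimately show "nq z \<le> d + e" using n1 by linarith
  qed
  have z_ge: "d \<le> nq (z + m')" if m': "m' \<in> M" for m'
  proof (rule field_le_epsilon)
    fix e :: real assume e: "0 < e"
    obtain N1 where N1: "\<forall>n\<ge>N1. nq (ms n - p) < e" using conv e by blast
    have n1: "nq (ms N1 - p) < e" using N1 by simp
    have "d \<le> nq (x - (ms N1 - m'))" using d_le Mdiff ms(1) m' by blast
    also have "x - (ms N1 - m') = (z + m') + (p - ms N1)" unfolding z_def by (simp add: algebra_simps)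
    also have "nq ((z + m') + (p - ms N1)) \<le> nq (z + m') + nq (p - ms N1)"
      using tri zD MD[OF m'] pD msD by simp
    also have "nq (p - ms N1) = nq (ms N1 - p)" using nq_commute pD msD by blast
    finally show "d \<le> nq (z + m') + e" using n1 by linarith
  qed
  have zorth: "\<forall>m\<in>M. q z m = 0"
  proof
    fix m assume m: "m \<in> M"
    have mD: "m \<in> D" using MD m .
    define w where "w = q z m"
    define W where "W = (cmod w)^2"
    define Qm where "Qm = Re (q m m)"
    have Qm: "0 \<le> Qm" unfolding Qm_def using q_pos mD by simp
    define t where "t = 1 / (Qm + 1)"
    have t: "0 < t" unfolding t_def using Qm by simp
    define a where "a = - (complex_of_real t * cnj w)"
    have "sm a m \<in> M" using Msm m by blast
    then have "nq z \<le> nq (z + sm a m)" using z_le z_ge[of "sm a m"] by linarith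
    then have "(nq z)^2 \<le> (nq (z + sm a m))^2" using nq_nonneg zD by (simp add: power_mono)
    then have "Re (q z z) \<le> Re (q (z + sm a m) (z + sm a m))" using nq_sq zD mD by simp
    also have "\<dots> = Re (q z z) + 2 * Re (a * w) + (cmod a)^2 * Qm"
      using expand[OF zD mD] unfolding w_def Qm_def by simp
    also have "a * w = - complex_of_real (t * W)"
    proof -
      have "cnj w * w = complex_of_real W" unfolding W_def
        by (metis complex_norm_square mult.commute of_real_power)
      then show ?thesis unfolding a_def by (metis mult.assoc mult_minus_left of_real_mult)
    qed
    also have "(cmod a)^2 = t^2 * W" unfolding a_def W_def
      using t by (simp add: norm_mult power_mult_distrib)
    finally have "0 \<le> - 2 * t * W + t^2 * W * Qm" by simp
    then have "2 * t * W \<le> t * (t * Qm) * W" by (simp add: power2_eq_square algebra_simps)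
    then have "2 * W \<le> (t * Qm) * W" using t by (simp add: mult.assoc)
    moreover have "t * Qm \<le> 1" unfolding t_def using Qm by (simp add: divide_le_eq)
    moreover have "0 \<le> W" unfolding W_def by simp
    ultimately have "2 * W \<le> W"
    proof -
      have "(t * Qm) * W \<le> 1 * W" using \<open>t * Qm \<le> 1\<close> \<open>0 \<le> W\<close> by (rule mult_right_mono)
      then show ?thesis using \<open>2 * W \<le> (t * Qm) * W\<close> by linarith
    qed
    then have "W = 0" using \<open>0 \<le> W\<close> by simp
    then show "q z m = 0" unfolding W_def w_def by simp
  qed
  have "z = 0" using orth zD zorth by blast
  then have px: "p = x" unfolding z_def by simp
  obtain N where "nq (ms N - p) < e" using conv e by blast
  then have "nq (x - ms N) < e" using nq_commute[OF msD x] px by simp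
  then show ?thesis using ms(1) by blast
qed

end


lemma ch1: "complex_hilbert sm ip \<Longrightarrow> \<forall>a x y. sm a (x + y) = sm a x + sm a y"
  unfolding complex_hilbert_def by (elim conjE) assumption

lemma ch2: "complex_hilbert sm ip \<Longrightarrow> \<forall>a b x. sm (a + b) x = sm a x + sm b x"
  unfolding complex_hilbert_def by (elim conjE) assumption

lemma ch3: "complex_hilbert sm ip \<Longrightarrow> \<forall>a b x. sm a (sm b x) = sm (a * b) x"
  unfolding complex_hilbert_def by (elim conjE) assumption

lemma ch4: "complex_hilbert sm ip \<Longrightarrow> \<forall>x. sm 1 x = x"
  unfolding complex_hilbert_def by (elim conjE) assumption

lemma ch5: "complex_hilbert sm ip \<Longrightarrow> \<forall>x y z. ip x (y + z) = ip x y + ip x z"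
  unfolding complex_hilbert_def by (elim conjE) assumption

lemma ch6: "complex_hilbert sm ip \<Longrightarrow> \<forall>a x y. ip x (sm a y) = a * ip x y"
  unfolding complex_hilbert_def by (elim conjE) assumption

lemma ch7: "complex_hilbert sm ip \<Longrightarrow> \<forall>x y. ip y x = cnj (ip x y)"
  unfolding complex_hilbert_def by (elim conjE) assumption

lemma ch8: "complex_hilbert sm ip \<Longrightarrow> \<forall>x. 0 \<le> Re (ip x x)"
  unfolding complex_hilbert_def by (elim conjE) assumption

lemma ch9: "complex_hilbert sm ip \<Longrightarrow> \<forall>x. ip x x = 0 \<longrightarrow> x = 0"
  unfolding complex_hilbert_def by (elim conjE) assumption

lemma ch10: "complex_hilbert sm ip \<Longrightarrow> \<forall>s::nat \<Rightarrow> _. (\<forall>e>0. \<exists>N. \<forall>m\<ge>N. \<forall>n\<ge>N. hnorm ip (s m - s n) < e) \<longrightarrow> (\<exists>l. \<forall>e>0. \<exists>N. \<forall>n\<ge>N. hnorm ip (s n - l) < e)"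
  unfolding complex_hilbert_def by (elim conjE) assumption

lemma hilb_vs: assumes h: "complex_hilbert sm ip" shows "vs sm"
  by (unfold_locales) (use ch1[OF h] ch2[OF h] ch3[OF h] ch4[OF h] in auto)

lemma hilb_phs: assumes h: "complex_hilbert sm ip" shows "phs sm UNIV ip"
proof (rule phs.intro[OF hilb_vs[OF h]], unfold_locales)
  show "lin_subspace sm UNIV" unfolding lin_subspace_def by simp
  fix x y z :: 'a and a :: complex and s :: "nat \<Rightarrow> 'a"
  show "ip x (y + z) = ip x y + ip x z" using ch5[OF h] by blast
  show "ip x (sm a y) = a * ip x y" using ch6[OF h] by blast
  show "ip y x = cnj (ip x y)" using ch7[OF h] by blast
  show "0 \<le> Re (ip x x)" using ch8[OF h] by blast
  show "ip x x = 0 \<Longrightarrow> x = 0" using ch9[OF h] by blast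
  show "\<forall>n. s n \<in> UNIV \<Longrightarrow> \<forall>e>0. \<exists>N. \<forall>m\<ge>N. \<forall>n\<ge>N. hnorm ip (s m - s n) < e \<Longrightarrow>
       \<exists>l\<in>UNIV. \<forall>e>0. \<exists>N. \<forall>n\<ge>N. hnorm ip (s n - l) < e"
    using ch10[OF h, rule_format, of s] by blast
qed

locale setting =
  fixes sm :: "complex \<Rightarrow> 'x::ab_group_add \<Rightarrow> 'x"
    and ip :: "'x \<Rightarrow> 'x \<Rightarrow> complex"
    and DA :: "'x set" and A :: "'x \<Rightarrow> 'x"
    and DS :: "'x set" and S :: "'x \<Rightarrow> 'x"
    and \<epsilon> :: real
  assumes hilb: "complex_hilbert sm ip"
    and eps_pos: "\<epsilon> > 0"
    and A_sa: "self_adjoint sm ip DA A"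
    and A_lower: "\<forall>\<xi>\<in>DA. Re (ip \<xi> (A \<xi>)) \<ge> \<epsilon> * Re (ip \<xi> \<xi>)"
    and sqrtA: "is_pos_sqrt sm ip DS S DA A"
begin

sublocale X: phs sm UNIV ip by (rule hilb_phs[OF hilb])

abbreviation "nrm \<equiv> hnorm ip"

lemma S_lin: "linear_op sm DS S" using sqrtA unfolding is_pos_sqrt_def self_adjoint_def by blast
lemma A_lin: "linear_op sm DA A" using A_sa unfolding self_adjoint_def by blast
lemma DS_sub: "lin_subspace sm DS" using S_lin X.lin_sub by blast
lemma DA_sub: "lin_subspace sm DA" using A_lin X.lin_sub by blast
lemma DA_eq: "DA = {\<xi>\<in>DS. S \<xi> \<in> DS}" using sqrtA unfolding is_pos_sqrt_def by blast
lemma SSA: "\<xi> \<in> DA \<Longrightarrow> S (S \<xi>) = A \<xi>" using sqrtA unfolding is_pos_sqrt_def by blast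
lemma DA_DS: "\<xi> \<in> DA \<Longrightarrow> \<xi> \<in> DS" using DA_eq by blast
lemma DA_SDS: "\<xi> \<in> DA \<Longrightarrow> S \<xi> \<in> DS" using DA_eq by blast
lemma S_sym: "\<xi> \<in> DS \<Longrightarrow> \<eta> \<in> DS \<Longrightarrow> ip \<eta> (S \<xi>) = ip (S \<eta>) \<xi>"
  using sqrtA unfolding is_pos_sqrt_def self_adjoint_def by blast
lemma S_adj: "adj_dom ip DS S = DS"
  using sqrtA unfolding is_pos_sqrt_def self_adjoint_def by blast
lemma DS_dense: "e > 0 \<Longrightarrow> \<exists>y\<in>DS. nrm (x - y) < e"
  using sqrtA unfolding is_pos_sqrt_def self_adjoint_def dense_in_def by blast
lemma A_adj: "adj_dom ip DA A = DA"
  using A_sa unfolding self_adjoint_def by blast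

lemma DS0[simp]: "0 \<in> DS" using DS_sub X.sub_zero by blast
lemma DSadd[simp]: "x \<in> DS \<Longrightarrow> y \<in> DS \<Longrightarrow> x + y \<in> DS" using DS_sub X.sub_add by blast
lemma DSsm[simp]: "x \<in> DS \<Longrightarrow> sm a x \<in> DS" using DS_sub X.sub_sm by blast
lemma DSminus[simp]: "x \<in> DS \<Longrightarrow> - x \<in> DS" using DS_sub X.sub_minus by blast
lemma DSdiff[simp]: "x \<in> DS \<Longrightarrow> y \<in> DS \<Longrightarrow> x - y \<in> DS" using DS_sub X.sub_diff by blast
lemma DA0[simp]: "0 \<in> DA" using DA_sub X.sub_zero by blast
lemma DAadd[simp]: "x \<in> DA \<Longrightarrow> y \<in> DA \<Longrightarrow> x + y \<in> DA" using DA_sub X.sub_add by blast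
lemma DAsm[simp]: "x \<in> DA \<Longrightarrow> sm a x \<in> DA" using DA_sub X.sub_sm by blast
lemma DAminus[simp]: "x \<in> DA \<Longrightarrow> - x \<in> DA" using DA_sub X.sub_minus by blast
lemma DAdiff[simp]: "x \<in> DA \<Longrightarrow> y \<in> DA \<Longrightarrow> x - y \<in> DA" using DA_sub X.sub_diff by blast

lemma S_add: "x \<in> DS \<Longrightarrow> y \<in> DS \<Longrightarrow> S (x + y) = S x + S y" using S_lin X.lin_add by blast
lemma S_sm: "x \<in> DS \<Longrightarrow> S (sm a x) = sm a (S x)" using S_lin X.lin_sm by blast
lemma S_diff: "x \<in> DS \<Longrightarrow> y \<in> DS \<Longrightarrow> S (x - y) = S x - S y" using S_lin X.lin_diff by blast
lemma S_minus: "x \<in> DS \<Longrightarrow> S (- x) = - S x" using S_lin X.lin_minus by blast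
lemma S_zero[simp]: "S 0 = 0" using S_lin X.lin_zero by blast
lemma A_add: "x \<in> DA \<Longrightarrow> y \<in> DA \<Longrightarrow> A (x + y) = A x + A y" using A_lin X.lin_add by blast
lemma A_sm: "x \<in> DA \<Longrightarrow> A (sm a x) = sm a (A x)" using A_lin X.lin_sm by blast

lemma ip_small_zero: assumes "\<And>e. e > 0 \<Longrightarrow> cmod z \<le> e" shows "z = 0"
proof (rule ccontr)
  assume "z \<noteq> 0"
  then have "cmod z > 0" by simp
  then have "cmod z \<le> cmod z / 2" using assms[of "cmod z / 2"] by simp
  then show False using \<open>cmod z > 0\<close> by simp
qed

lemma orth_dense_zero:
  assumes dense: "\<And>x e. e > 0 \<Longrightarrow> \<exists>m\<in>M. nrm (x - m) < e"
  and orth: "\<forall>m\<in>M. ip w m = 0"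
  shows "w = 0"
proof (rule ccontr)
  assume "w \<noteq> 0"
  then have pos: "nrm w > 0" using X.nq_eq0[of w] X.nq_nonneg[of w] by simp
  obtain m where m: "m \<in> M" "nrm (w - m) < nrm w" using dense pos by blast
  have "ip w w = ip w (w - m)" using orth m(1) by (simp add: X.q_diff_right)
  then have "Re (ip w w) \<le> nrm w * nrm (w - m)" using X.Re_le[of w "w - m"] by simp
  also have "\<dots> < nrm w * nrm w" using m(2) pos by simp
  finally show False using X.nq_sq[of w] by (simp add: power2_eq_square)
qed

definition convX :: "(nat \<Rightarrow> 'x) \<Rightarrow> 'x \<Rightarrow> bool" where
  "convX s l \<longleftrightarrow> (\<forall>e>0. \<exists>N. \<forall>n\<ge>N. nrm (s n - l) < e)"

lemma convX_ev: assumes "convX s l" "e > 0" shows "\<exists>N. \<forall>n\<ge>N. nrm (s n - l) < e"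
  using assms unfolding convX_def by blast

lemma S_closed:
  assumes xs: "\<forall>n. xs n \<in> DS" and cx: "convX xs x" and cy: "convX (\<lambda>n. S (xs n)) y"
  shows "x \<in> DS \<and> S x = y"
proof -
  have key: "ip x (S \<zeta>) = ip y \<zeta>" if z: "\<zeta> \<in> DS" for \<zeta>
  proof -
    have bound: "cmod (ip x (S \<zeta>) - ip y \<zeta>) \<le> nrm (x - xs n) * nrm (S \<zeta>) + nrm (S (xs n) - y) * nrm \<zeta>" for n
    proof -
      have "ip (xs n) (S \<zeta>) = ip (S (xs n)) \<zeta>" using S_sym z xs by blast
      then have "ip x (S \<zeta>) - ip y \<zeta> = ip (x - xs n) (S \<zeta>) + ip (S (xs n) - y) \<zeta>"
        by (simp add: X.q_diff_left)
      then have "cmod (ip x (S \<zeta>) - ip y \<zeta>) \<le> cmod (ip (x - xs n) (S \<zeta>)) + cmod (ip (S (xs n) - y) \<zeta>)"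
        by (simp add: norm_triangle_ineq)
      also have "\<dots> \<le> nrm (x - xs n) * nrm (S \<zeta>) + nrm (S (xs n) - y) * nrm \<zeta>"
        using X.CS by (simp add: add_mono)
      finally show ?thesis .
    qed
    show ?thesis
    proof (rule ip_small_zero[of "ip x (S \<zeta>) - ip y \<zeta>", simplified])
      fix e :: real assume e: "e > 0"
      define K where "K = nrm (S \<zeta>) + nrm \<zeta> + 1"
      have K: "K > 0" unfolding K_def using X.nq_nonneg by (simp add: add_nonneg_pos)
      obtain N1 where N1: "\<forall>n\<ge>N1. nrm (xs n - x) < e / K" using convX_ev[OF cx divide_pos_pos[OF e K]] by blast
      obtain N2 where N2: "\<forall>n\<ge>N2. nrm (S (xs n) - y) < e / K" using convX_ev[OF cy divide_pos_pos[OF e K]] by blast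
      define n where "n = max N1 N2"
      have "nrm (xs n - x) < e / K" using N1 n_def by simp
      then have a: "nrm (x - xs n) \<le> e / K" using X.nq_commute[of x "xs n"] by simp
      have "nrm (S (xs n) - y) < e / K" using N2 n_def by simp
      then have b: "nrm (S (xs n) - y) \<le> e / K" by simp
      have "nrm (x - xs n) * nrm (S \<zeta>) + nrm (S (xs n) - y) * nrm \<zeta> \<le> e / K * nrm (S \<zeta>) + e / K * nrm \<zeta>"
        by (rule add_mono[OF mult_right_mono[OF a X.nq_nonneg] mult_right_mono[OF b X.nq_nonneg]]) simp_all
      also have "\<dots> = e / K * (nrm (S \<zeta>) + nrm \<zeta>)" by (simp add: distrib_left)
      also have "\<dots> \<le> e / K * K"
        by (rule mult_left_mono) (use e K in \<open>simp_all add: K_def\<close>)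
      also have "\<dots> = e" using K by simp
      finally show "cmod (ip x (S \<zeta>) - ip y \<zeta>) \<le> e" using bound[of n] by linarith
    qed
  qed
  have xDS: "x \<in> DS"
  proof -
    have "x \<in> adj_dom ip DS S" unfolding adj_dom_def using key by blast
    then show ?thesis using S_adj by simp
  qed
  have "S x - y = 0"
  proof (rule orth_dense_zero[of DS])
    show "\<And>x e. e > 0 \<Longrightarrow> \<exists>m\<in>DS. nrm (x - m) < e" using DS_dense by blast
    show "\<forall>m\<in>DS. ip (S x - y) m = 0"
    proof
      fix m assume m: "m \<in> DS"
      have "ip (S x) m = ip x (S m)" using S_sym[OF m xDS] by simp
      then show "ip (S x - y) m = 0" using key[OF m] by (simp add: X.q_diff_left)
    qed
  qed
  then show ?thesis using xDS by simp
qed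

end


context setting
begin

definition gip :: "'x \<Rightarrow> 'x \<Rightarrow> complex" where
  "gip x y = ip (S x) (S y) + ip x y"

lemma gnorm_eq: "hnorm gip z = sqrt ((nrm (S z))^2 + (nrm z)^2)"
proof -
  have "Re (gip z z) = (nrm (S z))^2 + (nrm z)^2" unfolding gip_def using X.nq_sq by simp
  then show ?thesis unfolding hnorm_def[of gip z] by simp
qed

lemma gnorm_ge1: "nrm z \<le> hnorm gip z"
  unfolding gnorm_eq by (rule real_sqrt_sum_squares_ge2)
lemma gnorm_ge2: "nrm (S z) \<le> hnorm gip z"
  unfolding gnorm_eq by (rule real_sqrt_sum_squares_ge1)
lemma gnorm_le: "hnorm gip z \<le> nrm (S z) + nrm z"
  unfolding gnorm_eq by (rule sqrt_sum_squares_le_sum) (simp_all add: X.nq_nonneg)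

lemma G_phs: "phs sm DS gip"
proof (rule phs.intro[OF X.vs_axioms], unfold_locales)
  show "lin_subspace sm DS" by (rule DS_sub)
  fix x y z :: 'x and a :: complex and s :: "nat \<Rightarrow> 'x"
  show "x \<in> DS \<Longrightarrow> y \<in> DS \<Longrightarrow> z \<in> DS \<Longrightarrow> gip x (y + z) = gip x y + gip x z"
    unfolding gip_def by (simp add: S_add X.q_add)
  show "x \<in> DS \<Longrightarrow> y \<in> DS \<Longrightarrow> gip x (sm a y) = a * gip x y"
    unfolding gip_def by (simp add: S_sm X.q_sm distrib_left)
  show "x \<in> DS \<Longrightarrow> y \<in> DS \<Longrightarrow> gip y x = cnj (gip x y)"
    unfolding gip_def using X.q_herm[of x y] X.q_herm[of "S x" "S y"] by simp
  show "x \<in> DS \<Longrightarrow> 0 \<le> Re (gip x x)"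
    unfolding gip_def using X.q_pos[of x] X.q_pos[of "S x"] by simp
  show "x \<in> DS \<Longrightarrow> gip x x = 0 \<Longrightarrow> x = 0"
  proof -
    assume "gip x x = 0"
    then have "Re (ip (S x) (S x)) + Re (ip x x) = 0" unfolding gip_def by (metis plus_complex.sel(1) zero_complex.sel(1))
    then have "Re (ip x x) = 0" using X.q_pos[of x] X.q_pos[of "S x"] by simp
    then have "nrm x = 0" unfolding hnorm_def by simp
    then show "x = 0" using X.nq_eq0 by simp
  qed
  show "\<forall>n. s n \<in> DS \<Longrightarrow> \<forall>e>0. \<exists>N. \<forall>m\<ge>N. \<forall>n\<ge>N. hnorm gip (s m - s n) < e \<Longrightarrow>
       \<exists>l\<in>DS. \<forall>e>0. \<exists>N. \<forall>n\<ge>N. hnorm gip (s n - l) < e"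
  proof -
    assume sD: "\<forall>n. s n \<in> DS" and C: "\<forall>e>0. \<exists>N. \<forall>m\<ge>N. \<forall>n\<ge>N. hnorm gip (s m - s n) < e"
    have C1: "\<forall>e>0. \<exists>N. \<forall>m\<ge>N. \<forall>n\<ge>N. nrm (s m - s n) < e"
      using C gnorm_ge1 by (meson le_less_trans)
    have C2: "\<forall>e>0. \<exists>N. \<forall>m\<ge>N. \<forall>n\<ge>N. nrm (S (s m) - S (s n)) < e"
    proof (intro allI impI)
      fix e :: real assume "e > 0"
      then obtain N where N: "\<forall>m\<ge>N. \<forall>n\<ge>N. hnorm gip (s m - s n) < e" using C by blast
      show "\<exists>N. \<forall>m\<ge>N. \<forall>n\<ge>N. nrm (S (s m) - S (s n)) < e"
      proof (intro exI allI impI)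
        fix m n assume "N \<le> m" "N \<le> n"
        then have "hnorm gip (s m - s n) < e" using N by blast
        moreover have "S (s m) - S (s n) = S (s m - s n)" using S_diff sD by simp
        ultimately show "nrm (S (s m) - S (s n)) < e" using gnorm_ge2 by (metis le_less_trans)
      qed
    qed
    obtain x where x: "\<forall>e>0. \<exists>N. \<forall>n\<ge>N. nrm (s n - x) < e" using X.q_complete[of s] C1 by blast
    obtain y where y: "\<forall>e>0. \<exists>N. \<forall>n\<ge>N. nrm (S (s n) - y) < e" using X.q_complete[of "\<lambda>n. S (s n)"] C2 by blast
    have xy: "x \<in> DS \<and> S x = y" using S_closed[of s x y] sD x y unfolding convX_def by blast
    have "\<forall>e>0. \<exists>N. \<forall>n\<ge>N. hnorm gip (s n - x) < e"
    proof (intro allI impI)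
      fix e :: real assume e: "e > 0"
      obtain N1 where N1: "\<forall>n\<ge>N1. nrm (s n - x) < e/2" using x e by (meson half_gt_zero)
      obtain N2 where N2: "\<forall>n\<ge>N2. nrm (S (s n) - y) < e/2" using y e by (meson half_gt_zero)
      show "\<exists>N. \<forall>n\<ge>N. hnorm gip (s n - x) < e"
      proof (intro exI allI impI)
        fix n assume n: "max N1 N2 \<le> n"
        have "S (s n - x) = S (s n) - y" using S_diff sD xy by simp
        then have "hnorm gip (s n - x) \<le> nrm (S (s n) - y) + nrm (s n - x)" using gnorm_le by metis
        then show "hnorm gip (s n - x) < e" using N1 N2 n by fastforce
      qed
    qed
    then show ?thesis using xy by blast
  qed
qed

sublocale G: phs sm DS gip by (rule G_phs)

definition Rng where "Rng = {A \<phi> + \<phi> | \<phi>. \<phi> \<in> DA}"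

lemma Rng_dense: "e > 0 \<Longrightarrow> \<exists>m\<in>Rng. nrm (x - m) < e"
proof (rule X.dense_orth)
  show "lin_subspace sm Rng" unfolding lin_subspace_def Rng_def
  proof (intro conjI ballI allI)
    have "0 = A 0 + 0" using X.lin_zero[OF A_lin] by simp
    then show "0 \<in> {A \<phi> + \<phi> |\<phi>. \<phi> \<in> DA}" using DA0 by blast
    fix x y a assume "x \<in> {A \<phi> + \<phi> |\<phi>. \<phi> \<in> DA}" "y \<in> {A \<phi> + \<phi> |\<phi>. \<phi> \<in> DA}"
    then obtain \<phi> \<psi> where p: "\<phi> \<in> DA" "x = A \<phi> + \<phi>" and q: "\<psi> \<in> DA" "y = A \<psi> + \<psi>" by blast
    have "x + y = A (\<phi> + \<psi>) + (\<phi> + \<psi>)" using p q A_add by (simp add: algebra_simps)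
    moreover have "\<phi> + \<psi> \<in> DA" using p q by simp
    ultimately show "x + y \<in> {A \<phi> + \<phi> |\<phi>. \<phi> \<in> DA}" by blast
    have "sm a x = A (sm a \<phi>) + sm a \<phi>" using p A_sm X.sm_add_right by simp
    moreover have "sm a \<phi> \<in> DA" using p by simp
    ultimately show "sm a x \<in> {A \<phi> + \<phi> |\<phi>. \<phi> \<in> DA}" by blast
  qed
  show "Rng \<subseteq> UNIV" by simp
  show "\<forall>w\<in>UNIV. (\<forall>m\<in>Rng. ip w m = 0) \<longrightarrow> w = 0"
  proof (intro ballI impI)
    fix w assume o: "\<forall>m\<in>Rng. ip w m = 0"
    have h: "ip w (A \<phi>) = ip (- w) \<phi>" if "\<phi> \<in> DA" for \<phi>
    proof -
      have "ip w (A \<phi> + \<phi>) = 0" using o that unfolding Rng_def by blast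
      then show ?thesis by (simp add: X.q_add X.q_minus_left eq_neg_iff_add_eq_0)
    qed
    have "w \<in> adj_dom ip DA A" unfolding adj_dom_def using h by blast
    then have wD: "w \<in> DA" using A_adj by simp
    have "Re (ip w (A w)) = - Re (ip w w)" using h[OF wD] by (simp add: X.q_minus_left)
    moreover have "Re (ip w (A w)) \<ge> \<epsilon> * Re (ip w w)" using A_lower wD by blast
    moreover have "Re (ip w w) \<ge> 0" using X.q_pos by simp
    moreover have "\<epsilon> * Re (ip w w) \<ge> 0" using eps_pos X.q_pos by simp
    ultimately have "Re (ip w w) = 0" by linarith
    then have "nrm w = 0" unfolding hnorm_def by simp
    then show "w = 0" using X.nq_eq0 by simp
  qed
qed simp_all

lemma DA_gdense: assumes x: "x \<in> DS" and e: "e > 0" shows "\<exists>\<phi>\<in>DA. hnorm gip (x - \<phi>) < e"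
proof (rule G.dense_orth[OF DA_sub _ _ x e])
  show "DA \<subseteq> DS" using DA_DS by blast
  show "\<forall>w\<in>DS. (\<forall>m\<in>DA. gip w m = 0) \<longrightarrow> w = 0"
  proof (intro ballI impI)
    fix w assume wD: "w \<in> DS" and o: "\<forall>m\<in>DA. gip w m = 0"
    show "w = 0"
    proof (rule orth_dense_zero[of Rng])
      show "\<And>x e. e > 0 \<Longrightarrow> \<exists>m\<in>Rng. nrm (x - m) < e" using Rng_dense by blast
      show "\<forall>m\<in>Rng. ip w m = 0"
      proof
        fix m assume "m \<in> Rng"
        then obtain \<phi> where p: "\<phi> \<in> DA" "m = A \<phi> + \<phi>" unfolding Rng_def by blast
        have "ip w (S (S \<phi>)) = ip (S w) (S \<phi>)" using S_sym[OF DA_SDS[OF p(1)] wD] .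
        then have "gip w \<phi> = ip w (A \<phi>) + ip w \<phi>" unfolding gip_def using SSA[OF p(1)] by simp
        then show "ip w m = 0" using o p by (simp add: X.q_add)
      qed
    qed
  qed
qed

lemma lower_DA: assumes p: "\<phi> \<in> DA" shows "sqrt \<epsilon> * nrm \<phi> \<le> nrm (S \<phi>)"
proof -
  have "ip (S \<phi>) (S \<phi>) = ip \<phi> (S (S \<phi>))" using S_sym[OF DA_SDS[OF p] DA_DS[OF p]] by simp
  then have "(nrm (S \<phi>))^2 = Re (ip \<phi> (A \<phi>))" using X.nq_sq SSA[OF p] by simp
  also have "\<dots> \<ge> \<epsilon> * (nrm \<phi>)^2" using A_lower p X.nq_sq by simp
  finally have "(sqrt \<epsilon> * nrm \<phi>)^2 \<le> (nrm (S \<phi>))^2" using eps_pos by (simp add: power_mult_distrib)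
  then show ?thesis using X.nq_nonneg power2_le_imp_le by blast
qed

lemma lower: assumes x: "x \<in> DS" shows "sqrt \<epsilon> * nrm x \<le> nrm (S x)"
proof (rule field_le_epsilon)
  fix e :: real assume e: "0 < e"
  define e' where "e' = e / (1 + sqrt \<epsilon>)"
  have sp: "1 + sqrt \<epsilon> > 0" using eps_pos by (simp add: add_pos_nonneg)
  have e': "e' > 0" unfolding e'_def using e sp by simp
  obtain \<phi> where p: "\<phi> \<in> DA" "hnorm gip (x - \<phi>) < e'" using DA_gdense[OF x e'] by blast
  have pS: "\<phi> \<in> DS" using DA_DS p(1) .
  have d1: "nrm (x - \<phi>) < e'" using p(2) gnorm_ge1 by (metis le_less_trans)
  have d2: "nrm (S x - S \<phi>) < e'" using p(2) gnorm_ge2 S_diff[OF x pS] by (metis le_less_trans)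
  have "nrm x \<le> nrm \<phi> + nrm (x - \<phi>)" using X.tri[of \<phi> "x - \<phi>"] by simp
  also have "\<dots> \<le> nrm \<phi> + e'" using d1 by simp
  finally have "sqrt \<epsilon> * nrm x \<le> sqrt \<epsilon> * (nrm \<phi> + e')"
    by (rule mult_left_mono) (use eps_pos in simp)
  then have "sqrt \<epsilon> * nrm x \<le> sqrt \<epsilon> * nrm \<phi> + sqrt \<epsilon> * e'" by (simp add: distrib_left)
  also have "\<dots> \<le> nrm (S \<phi>) + sqrt \<epsilon> * e'" using lower_DA[OF p(1)] by simp
  also have "nrm (S \<phi>) \<le> nrm (S x) + nrm (S \<phi> - S x)" using X.tri[of "S x" "S \<phi> - S x"] by simp
  also have "nrm (S \<phi> - S x) = nrm (S x - S \<phi>)" using X.nq_commute by simp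
  finally have "sqrt \<epsilon> * nrm x \<le> nrm (S x) + e' * (1 + sqrt \<epsilon>)" using d2 by (simp add: algebra_simps)
  also have "e' * (1 + sqrt \<epsilon>) = e" unfolding e'_def using sp by simp
  finally show "sqrt \<epsilon> * nrm x \<le> nrm (S x) + e" .
qed

end


lemma rd_mono:
  fixes f :: "real \<Rightarrow> real"
  assumes ab: "a \<le> b"
  and cont: "continuous_on {a..b} f"
  and rd: "\<And>x. a \<le> x \<Longrightarrow> x < b \<Longrightarrow> \<forall>e>0. \<exists>\<delta>>0. \<forall>h. 0 < h \<and> h < \<delta> \<longrightarrow> f (x + h) \<le> f x + e * h"
  shows "f b \<le> f a"
proof (rule field_le_epsilon)
  fix e :: real assume e: "0 < e"
  define P where "P = (\<lambda>x. f x \<le> f a + (e / (b - a + 1)) * (x - a))"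
  define e' where "e' = e / (b - a + 1)"
  have e': "e' > 0" unfolding e'_def using e ab by simp
  have Pdef: "P x \<longleftrightarrow> f x \<le> f a + e' * (x - a)" for x unfolding P_def e'_def by simp
  define K where "K = {x \<in> {a..b}. \<forall>y\<in>{a..x}. P y}"
  have aK: "a \<in> K" unfolding K_def using ab Pdef by auto
  have bddK: "bdd_above K" unfolding K_def by (rule bdd_aboveI[of _ b]) auto
  define s where "s = Sup K"
  have as: "a \<le> s" unfolding s_def using aK bddK by (rule cSup_upper)
  have sb: "s \<le> b" unfolding s_def using aK by (intro cSup_least) (auto simp: K_def)
  have below: "P y" if y1: "a \<le> y" and y2: "y < s" for y
  proof -
    obtain x where x: "x \<in> K" "y < x" using less_cSupE[of y K] y2 aK unfolding s_def by blast
    then show ?thesis using y1 unfolding K_def by auto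
  qed
  have Ps: "P s"
  proof (cases "s = a")
    case True then show ?thesis using Pdef by simp
  next
    case False
    then have as': "a < s" using as by simp
    show ?thesis
    proof (rule ccontr)
      assume nP: "\<not> P s"
      then have gap: "f s - (f a + e' * (s - a)) > 0" using Pdef by simp
      define g where "g = f s - (f a + e' * (s - a))"
      have "s \<in> {a..b}" using as sb by simp
      then obtain d where d: "d > 0" "\<forall>y\<in>{a..b}. dist y s < d \<longrightarrow> dist (f y) (f s) < g / 2"
        using cont gap unfolding continuous_on_iff g_def by (meson half_gt_zero)
      define m where "m = min d (g / (2 * e'))"
      define y where "y = max a (s - m / 2)"
      have ypos: "m > 0" using d gap e' unfolding g_def m_def by simp
      have m1: "m \<le> d" "m \<le> g / (2 * e')" unfolding m_def by simp_all
      have sy: "s - m / 2 \<le> y" unfolding y_def by (rule max.cobounded2)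
      have y1: "a \<le> y" "y < s" using as' ypos unfolding y_def by auto
      have y2: "y \<in> {a..b}" using y1 sb by simp
      have "dist y s < d" using y1 ypos sy m1 unfolding dist_real_def by simp
      then have "dist (f y) (f s) < g / 2" using d(2) y2 by blast
      then have fy: "f y > f s - g / 2" unfolding dist_real_def by linarith
      have "e' * (s - y) \<le> e' * (g / (2 * e'))"
      proof (rule mult_left_mono)
        show "s - y \<le> g / (2 * e')" using ypos sy m1 by simp
      qed (use e' in simp)
      then have "e' * (s - y) \<le> g / 2" using e' by simp
      have "P y" using below y1 by blast
      then have h1: "f y \<le> f a + (e' * y - e' * a)" using Pdef[of y] by (simp add: right_diff_distrib)
      have h2: "e' * y \<le> e' * s" using e' y1 by simp
      have h3: "f s - (f a + (e' * s - e' * a)) > 0" using gap by (simp add: right_diff_distrib)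
      have h4: "f y > f s - (f s - (f a + (e' * s - e' * a))) / 2" using fy unfolding g_def by (simp add: right_diff_distrib)
      show False using h1 h2 h3 h4 by argo
    qed
  qed
  have sK: "s \<in> K" unfolding K_def using as sb below Ps by (auto simp: le_less)
  have "s = b"
  proof (rule ccontr)
    assume "s \<noteq> b"
    then have sb': "s < b" using sb by simp
    obtain \<delta> where \<delta>: "\<delta> > 0" "\<forall>h. 0 < h \<and> h < \<delta> \<longrightarrow> f (s + h) \<le> f s + e' * h"
      using rd[OF as sb'] e' by blast
    define h where "h = min \<delta> (b - s) / 2"
    have mm: "min \<delta> (b - s) \<le> \<delta>" "min \<delta> (b - s) \<le> b - s" "min \<delta> (b - s) > 0" using \<delta> sb' by auto
    have h: "0 < h" "h < \<delta>" "s + h \<le> b" using mm unfolding h_def by argo+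
    have "f (s + h) \<le> f s + e' * h" using \<delta>(2) h by blast
    also have "f s \<le> f a + e' * (s - a)" using Ps Pdef by simp
    finally have "P (s + h)" using Pdef by (simp add: algebra_simps)
    have "\<forall>y\<in>{a..s + h}. P y"
    proof
      fix y assume "y \<in> {a..s + h}"
      then have "a \<le> y" "y < s \<or> y = s \<or> (s < y \<and> y \<le> s + h)" by auto
      then show "P y"
      proof (elim disjE conjE)
        assume "y < s" then show "P y" using below \<open>a \<le> y\<close> by blast
      next
        assume "y = s" then show "P y" using Ps by simp
      next
        assume y: "s < y" "y \<le> s + h"
        define h' where "h' = y - s"
        have "0 < h'" "h' < \<delta>" using y h unfolding h'_def by auto
        then have "f (s + h') \<le> f s + e' * h'" using \<delta>(2) by blast
        then have "f y \<le> f s + e' * (y - s)" unfolding h'_def by simp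
        then show "P y" using Ps Pdef by (simp add: algebra_simps)
      qed
    qed
    then have "s + h \<in> K" unfolding K_def using as h by simp
    then have "s + h \<le> s" unfolding s_def using bddK by (rule cSup_upper)
    then show False using h by simp
  qed
  then have "P b" using Ps by simp
  then have "f b \<le> f a + e' * (b - a)" using Pdef by simp
  also have "e' * (b - a) \<le> e"
  proof -
    have "e' * (b - a) \<le> e' * (b - a + 1)" using e' by simp
    also have "\<dots> = e" unfolding e'_def using ab by simp
    finally show ?thesis .
  qed
  finally show "f b \<le> f a + e" by simp
qed

lemma rdv_deriv:
  fixes f :: "real \<Rightarrow> real"
  assumes "\<forall>e>0. \<exists>\<delta>>0. \<forall>h. 0 < h \<and> h < \<delta> \<longrightarrow> \<bar>f (x + h) - f x - h * D\<bar> \<le> e * h"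
  shows "(f has_real_derivative D) (at x within {x..})"
  unfolding has_field_derivative_iff tendsto_iff eventually_at
proof (intro allI impI)
  fix e :: real assume e: "e > 0"
  obtain \<delta> where d: "\<delta> > 0" "\<forall>h. 0 < h \<and> h < \<delta> \<longrightarrow> \<bar>f (x + h) - f x - h * D\<bar> \<le> (e/2) * h"
    using assms e by (meson half_gt_zero)
  show "\<exists>d>0. \<forall>y\<in>{x..}. y \<noteq> x \<and> dist y x < d \<longrightarrow> dist ((f y - f x) / (y - x)) D < e"
  proof (intro exI conjI ballI impI)
    show "\<delta> > 0" using d by simp
    fix y assume y: "y \<in> {x..}" "y \<noteq> x \<and> dist y x < \<delta>"
    define h where "h = y - x"
    have h: "0 < h" "h < \<delta>" using y unfolding h_def dist_real_def by auto
    have yh: "y = x + h" unfolding h_def by simp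
    have "\<bar>f y - f x - h * D\<bar> \<le> (e/2) * h" using d(2) h yh by blast
    then have "\<bar>(f y - f x) / h - D\<bar> \<le> e/2" using h
      by (simp add: divide_simps abs_divide) (simp add: algebra_simps)
    then show "dist ((f y - f x) / (y - x)) D < e" unfolding dist_real_def h_def[symmetric] using e by simp
  qed
qed

lemma deriv_dini:
  fixes f :: "real \<Rightarrow> real"
  assumes "(f has_real_derivative D) (at x within {x..})" "D \<le> 0"
  shows "\<forall>e>0. \<exists>\<delta>>0. \<forall>h. 0 < h \<and> h < \<delta> \<longrightarrow> f (x + h) \<le> f x + e * h"
proof (intro allI impI)
  fix e :: real assume e: "e > 0"
  from assms(1) have "\<forall>e>0. \<exists>d>0. \<forall>y\<in>{x..}. y \<noteq> x \<and> dist y x < d \<longrightarrow> dist ((f y - f x) / (y - x)) D < e"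
    unfolding has_field_derivative_iff tendsto_iff eventually_at by blast
  then obtain d where d: "d > 0" "\<forall>y\<in>{x..}. y \<noteq> x \<and> dist y x < d \<longrightarrow> dist ((f y - f x) / (y - x)) D < e"
    using e by blast
  show "\<exists>\<delta>>0. \<forall>h. 0 < h \<and> h < \<delta> \<longrightarrow> f (x + h) \<le> f x + e * h"
  proof (intro exI conjI allI impI)
    show "d > 0" using d by simp
    fix h assume h: "0 < h \<and> h < d"
    have "dist ((f (x + h) - f x) / h) D < e" using d(2)[rule_format, of "x + h"] h by (simp add: dist_real_def)
    then have "(f (x + h) - f x) / h < e" using assms(2) unfolding dist_real_def by linarith
    then show "f (x + h) \<le> f x + e * h" using h by (simp add: divide_simps mult.commute)
  qed
qed

lemma exp_weight_deriv:
  fixes E :: "real \<Rightarrow> real"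
  assumes "(E has_real_derivative DE) (at x within {x..})"
  shows "((\<lambda>s. exp (- (2 * m * s)) * E s) has_real_derivative exp (- (2 * m * x)) * (DE - 2 * m * E x)) (at x within {x..})"
  by (auto intro!: derivative_eq_intros assms simp: algebra_simps)

lemma sqrt_deriv:
  fixes b :: "real \<Rightarrow> real"
  assumes "(b has_real_derivative Db) (at x within {x..})" "b x + d > 0"
  shows "((\<lambda>s. sqrt (b s + d) - K * s) has_real_derivative inverse (sqrt (b x + d)) / 2 * Db - K * 1) (at x within {x..})"
proof -
  have 1: "((\<lambda>s. b s + d) has_real_derivative Db + 0) (at x within {x..})"
    by (rule DERIV_add[OF assms(1) DERIV_const])
  have 2: "((\<lambda>s. sqrt (b s + d)) has_real_derivative inverse (sqrt (b x + d)) / 2 * (Db + 0)) (at x within {x..})"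
    by (rule DERIV_chain2[OF DERIV_real_sqrt[OF assms(2)] 1])
  show ?thesis using DERIV_diff[OF 2 DERIV_cmult[OF DERIV_ident, where c=K]] by simp
qed


context setting
begin

abbreviation "Yn \<equiv> Ynorm ip S"

lemma Yset_iff: "p \<in> Yset DS \<longleftrightarrow> fst p \<in> DS"
  unfolding Yset_def by (cases p) auto

lemma Y_add[simp]: "p \<in> Yset DS \<Longrightarrow> q \<in> Yset DS \<Longrightarrow> p + q \<in> Yset DS" by (simp add: Yset_iff)
lemma Y_diff[simp]: "p \<in> Yset DS \<Longrightarrow> q \<in> Yset DS \<Longrightarrow> p - q \<in> Yset DS" by (simp add: Yset_iff)
lemma Y_minus[simp]: "p \<in> Yset DS \<Longrightarrow> - p \<in> Yset DS" by (simp add: Yset_iff)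
lemma Y_sm[simp]: "p \<in> Yset DS \<Longrightarrow> Ysm sm a p \<in> Yset DS" by (simp add: Yset_iff Ysm_def)
lemma Y_zero[simp]: "0 \<in> Yset DS" by (simp add: Yset_iff)

lemma Yn_sq: "(Yn p)^2 = (nrm (S (fst p)))^2 + (nrm (snd p))^2"
  unfolding Ynorm_def by simp
lemma Yn_nonneg: "0 \<le> Yn p" unfolding Ynorm_def by simp
lemma Yn_fst: "nrm (S (fst p)) \<le> Yn p"
  unfolding Ynorm_def by (rule real_sqrt_sum_squares_ge1)
lemma Yn_snd: "nrm (snd p) \<le> Yn p"
  unfolding Ynorm_def by (rule real_sqrt_sum_squares_ge2)
lemma Yn_le: "Yn p \<le> nrm (S (fst p)) + nrm (snd p)"
  unfolding Ynorm_def by (rule sqrt_sum_squares_le_sum) (simp_all add: X.nq_nonneg)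

lemma Yn_tri: assumes p: "p \<in> Yset DS" and q: "q \<in> Yset DS" shows "Yn (p + q) \<le> Yn p + Yn q"
proof -
  have p1: "fst p \<in> DS" and q1: "fst q \<in> DS" using p q by (simp_all add: Yset_iff)
  have h1: "nrm (S (fst (p + q))) \<le> nrm (S (fst p)) + nrm (S (fst q))"
    using X.tri[of "S (fst p)" "S (fst q)"] S_add[OF p1 q1] by simp
  have h2: "nrm (snd (p + q)) \<le> nrm (snd p) + nrm (snd q)"
    using X.tri[of "snd p" "snd q"] by simp
  have "Yn (p + q) \<le> sqrt ((nrm (S (fst p)) + nrm (S (fst q)))^2 + (nrm (snd p) + nrm (snd q))^2)"
    unfolding Ynorm_def
    by (intro real_sqrt_le_mono add_mono power_mono h1 h2) (simp_all add: X.nq_nonneg)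
  also have "\<dots> \<le> Yn p + Yn q" unfolding Ynorm_def by (rule real_sqrt_sum_squares_triangle_ineq)
  finally show ?thesis .
qed

lemma Yn_sm: assumes p: "p \<in> Yset DS" shows "Yn (Ysm sm a p) = cmod a * Yn p"
proof -
  have p1: "fst p \<in> DS" using p by (simp add: Yset_iff)
  have "(Yn (Ysm sm a p))^2 = (cmod a)^2 * (Yn p)^2"
    unfolding Yn_sq Ysm_def using S_sm[OF p1] X.nq_sm by (simp add: power_mult_distrib algebra_simps)
  also have "\<dots> = (cmod a * Yn p)^2" by (simp add: power_mult_distrib)
  finally show ?thesis using Yn_nonneg by (simp add: power2_eq_iff_nonneg)
qed

lemma Ysm_minus_one: "Ysm sm (-1) p = - p"
  unfolding Ysm_def by (simp add: X.sm_minus_one prod_eq_iff)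

lemma Yn_minus: "p \<in> Yset DS \<Longrightarrow> Yn (- p) = Yn p"
  using Yn_sm[of p "-1"] Ysm_minus_one by simp

lemma Yn_commute: "p \<in> Yset DS \<Longrightarrow> q \<in> Yset DS \<Longrightarrow> Yn (p - q) = Yn (q - p)"
  by (metis Y_diff Yn_minus minus_diff_eq)

lemma Ysm_add: "Ysm sm a (p + q) = Ysm sm a p + Ysm sm a q"
  unfolding Ysm_def by (simp add: X.sm_add_right prod_eq_iff)
lemma Ysm_diff: "Ysm sm a (p - q) = Ysm sm a p - Ysm sm a q"
  unfolding Ysm_def by (simp add: X.sm_diff_right prod_eq_iff)
lemma Ysm_assoc: "Ysm sm a (Ysm sm b p) = Ysm sm (a * b) p"
  unfolding Ysm_def by (simp add: X.sm_assoc)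
lemma Ysm_one: "Ysm sm 1 p = p"
  unfolding Ysm_def by (simp add: X.sm_one)

lemma sqn_rdv:
  fixes x :: "real \<Rightarrow> 'x"
  assumes conv: "\<forall>e>0. \<exists>\<delta>>0. \<forall>h. 0 < h \<and> h < \<delta> \<longrightarrow> nrm (sm (complex_of_real (1/h)) (x (t+h) - x t) - y) < e"
  shows "\<forall>e>0. \<exists>\<delta>>0. \<forall>h. 0 < h \<and> h < \<delta> \<longrightarrow>
           \<bar>(nrm (x (t+h)))^2 - (nrm (x t))^2 - h * (2 * Re (ip (x t) y))\<bar> \<le> e * h"
proof (intro allI impI)
  fix e :: real assume e: "e > 0"
  define X0 where "X0 = nrm (x t)"
  define Y0 where "Y0 = nrm y"
  have X0: "X0 \<ge> 0" and Y0: "Y0 \<ge> 0" unfolding X0_def Y0_def by (simp_all add: X.nq_nonneg)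
  define \<eta> where "\<eta> = min 1 (e / (4 * (X0 + 1)))"
  have \<eta>: "\<eta> > 0" "\<eta> \<le> 1" "\<eta> \<le> e / (4 * (X0 + 1))" unfolding \<eta>_def using e X0 by auto
  obtain \<delta>1 where d1: "\<delta>1 > 0" "\<forall>h. 0 < h \<and> h < \<delta>1 \<longrightarrow> nrm (sm (complex_of_real (1/h)) (x (t+h) - x t) - y) < \<eta>"
    using conv \<eta>(1) by blast
  define \<delta> where "\<delta> = min \<delta>1 (e / (2 * (Y0 + 1)^2))"
  have Yp: "(Y0 + 1)^2 > 0" using Y0 by (simp add: add_nonneg_pos)
  have \<delta>: "\<delta> > 0" "\<delta> \<le> \<delta>1" "\<delta> \<le> e / (2 * (Y0 + 1)^2)" unfolding \<delta>_def using d1 e Yp by auto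
  show "\<exists>\<delta>>0. \<forall>h. 0 < h \<and> h < \<delta> \<longrightarrow>
           \<bar>(nrm (x (t+h)))^2 - (nrm (x t))^2 - h * (2 * Re (ip (x t) y))\<bar> \<le> e * h"
  proof (intro exI conjI allI impI)
    show "\<delta> > 0" by (rule \<delta>(1))
    fix h assume h: "0 < h \<and> h < \<delta>"
    define d where "d = x (t+h) - x t"
    define r where "r = sm (complex_of_real (1/h)) d - y"
    have r: "nrm r < \<eta>" unfolding r_def d_def using d1(2) h \<delta>(2) by simp
    have dr: "d = sm (complex_of_real h) (y + r)"
    proof -
      have "sm (complex_of_real h) (y + r) = sm (complex_of_real h) (sm (complex_of_real (1/h)) d)"
        unfolding r_def by simp
      also have "\<dots> = sm (complex_of_real h * complex_of_real (1/h)) d" by (rule X.sm_assoc)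
      also have "complex_of_real h * complex_of_real (1/h) = 1" using h by (simp flip: of_real_mult)
      finally show ?thesis by (simp add: X.sm_one)
    qed
    have xth: "x (t+h) = x t + d" unfolding d_def by simp
    have "(nrm (x (t+h)))^2 = (nrm (x t))^2 + 2 * Re (ip (x t) d) + (nrm d)^2"
      unfolding xth using X.expand_add[of "x t" d] X.nq_sq by simp
    moreover have "ip (x t) d = complex_of_real h * (ip (x t) y + ip (x t) r)"
      unfolding dr by (simp add: X.q_sm X.q_add)
    moreover have nd: "nrm d = h * nrm (y + r)" unfolding dr using X.nq_sm h by simp
    ultimately have eq: "(nrm (x (t+h)))^2 - (nrm (x t))^2 - h * (2 * Re (ip (x t) y))
        = 2 * h * Re (ip (x t) r) + h^2 * (nrm (y + r))^2"
      by (simp add: algebra_simps power_mult_distrib)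
    have b1: "\<bar>Re (ip (x t) r)\<bar> \<le> X0 * \<eta>"
    proof -
      have "\<bar>Re (ip (x t) r)\<bar> \<le> X0 * nrm r" unfolding X0_def using X.Re_le by simp
      also have "\<dots> \<le> X0 * \<eta>" using r X0 by (simp add: mult_left_mono)
      finally show ?thesis .
    qed
    have b2: "nrm (y + r) \<le> Y0 + 1"
    proof -
      have "nrm (y + r) \<le> Y0 + nrm r" unfolding Y0_def using X.tri by simp
      then show ?thesis using r \<eta>(2) by simp
    qed
    have b2': "(nrm (y + r))^2 \<le> (Y0 + 1)^2" using b2 X.nq_nonneg by (simp add: power_mono)
    have "\<bar>2 * h * Re (ip (x t) r) + h^2 * (nrm (y + r))^2\<bar> \<le> 2 * h * \<bar>Re (ip (x t) r)\<bar> + h^2 * (nrm (y + r))^2"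
      using h by (simp add: abs_mult abs_triangle_ineq[THEN order_trans])
    also have "\<dots> \<le> 2 * h * (X0 * \<eta>) + h^2 * (Y0 + 1)^2"
      using b1 b2' h by (intro add_mono mult_left_mono) simp_all
    also have "2 * h * (X0 * \<eta>) \<le> h * (e / 2)"
    proof -
      have "X0 * \<eta> \<le> X0 * (e / (4 * (X0 + 1)))" by (rule mult_left_mono[OF \<eta>(3) X0])
      also have "\<dots> \<le> e / 4" using X0 e by (simp add: divide_simps)
      finally show ?thesis using h by simp
    qed
    also have "h^2 * (Y0 + 1)^2 \<le> h * (e / 2)"
    proof -
      have "h * (Y0 + 1)^2 \<le> e / (2 * (Y0 + 1)^2) * (Y0 + 1)^2"
        using h \<delta>(3) Yp by (intro mult_right_mono) simp_all
      also have "\<dots> = e / 2" using Yp by simp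
      finally show ?thesis using h by (simp add: power2_eq_square mult.assoc mult_left_mono)
    qed
    finally show "\<bar>(nrm (x (t+h)))^2 - (nrm (x t))^2 - h * (2 * Re (ip (x t) y))\<bar> \<le> e * h"
      unfolding eq by simp
  qed
qed

end


locale sg = setting sm ip DA A DS S \<epsilon>
  for sm :: "complex \<Rightarrow> 'x::ab_group_add \<Rightarrow> 'x" and ip DA A DS S \<epsilon> +
  fixes B :: "'x \<Rightarrow> 'x" and c :: complex and T :: "real \<Rightarrow> 'x \<times> 'x \<Rightarrow> 'x \<times> 'x" and \<mu> :: real
  assumes B_lin: "linear_op sm DS B"
  and c_cases: "c = \<i> \<or> c = - \<i>"
  and Tgen: "C0_semigroup_gen sm ip DS S (DA \<times> DS) (Gop sm c A B (\<lambda>\<xi>. sm (complex_of_real (- \<epsilon>)) \<xi>)) T"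
  and mu_nonneg: "0 \<le> \<mu>"
  and Bbound: "\<forall>v\<in>DS. Re (c * ip v (B v)) \<le> \<mu> * (nrm v)^2"
begin

abbreviation "G0 \<equiv> Gop sm c A B (\<lambda>\<xi>. sm (complex_of_real (- \<epsilon>)) \<xi>)"

lemma T_Y: "t \<ge> 0 \<Longrightarrow> \<xi> \<in> Yset DS \<Longrightarrow> T t \<xi> \<in> Yset DS"
  using Tgen[unfolded C0_semigroup_gen_def, THEN conjunct1] by blast
lemma T_add: "t \<ge> 0 \<Longrightarrow> \<xi> \<in> Yset DS \<Longrightarrow> \<eta> \<in> Yset DS \<Longrightarrow> T t (\<xi> + \<eta>) = T t \<xi> + T t \<eta>"
  using Tgen[unfolded C0_semigroup_gen_def, THEN conjunct2, THEN conjunct1] by blast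
lemma T_sm: "t \<ge> 0 \<Longrightarrow> \<xi> \<in> Yset DS \<Longrightarrow> T t (Ysm sm a \<xi>) = Ysm sm a (T t \<xi>)"
  using Tgen[unfolded C0_semigroup_gen_def, THEN conjunct2, THEN conjunct2, THEN conjunct1] by blast
lemma T_bdd0: "t \<ge> 0 \<Longrightarrow> \<exists>M. \<forall>\<xi>\<in>Yset DS. Yn (T t \<xi>) \<le> M * Yn \<xi>"
  using Tgen[unfolded C0_semigroup_gen_def, THEN conjunct2, THEN conjunct2, THEN conjunct2, THEN conjunct1] by blast
lemma T_zero: "\<xi> \<in> Yset DS \<Longrightarrow> T 0 \<xi> = \<xi>"
  using Tgen[unfolded C0_semigroup_gen_def, THEN conjunct2, THEN conjunct2, THEN conjunct2, THEN conjunct2, THEN conjunct1] by blast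
lemma T_comp: "s \<ge> 0 \<Longrightarrow> t \<ge> 0 \<Longrightarrow> \<xi> \<in> Yset DS \<Longrightarrow> T (s + t) \<xi> = T s (T t \<xi>)"
  using Tgen[unfolded C0_semigroup_gen_def, THEN conjunct2, THEN conjunct2, THEN conjunct2, THEN conjunct2, THEN conjunct2, THEN conjunct1] by blast
lemma T_cont: "\<xi> \<in> Yset DS \<Longrightarrow> t \<ge> 0 \<Longrightarrow> e > 0 \<Longrightarrow> \<exists>\<delta>>0. \<forall>s\<ge>0. \<bar>s - t\<bar> < \<delta> \<longrightarrow> Yn (T s \<xi> - T t \<xi>) < e"
  using Tgen[unfolded C0_semigroup_gen_def, THEN conjunct2, THEN conjunct2, THEN conjunct2, THEN conjunct2, THEN conjunct2, THEN conjunct2, THEN conjunct1] by blast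
lemma T_gen1: "\<xi> \<in> Yset DS \<Longrightarrow> (\<xi> \<in> DA \<times> DS \<longleftrightarrow> (\<exists>L\<in>Yset DS. \<forall>e>0. \<exists>\<delta>>0. \<forall>h. 0 < h \<and> h < \<delta> \<longrightarrow>
            Yn (Ysm sm (complex_of_real (1 / h)) (T h \<xi> - \<xi>) - L) < e))"
  using Tgen[unfolded C0_semigroup_gen_def, THEN conjunct2, THEN conjunct2, THEN conjunct2, THEN conjunct2, THEN conjunct2, THEN conjunct2, THEN conjunct2] by blast
lemma T_gen2: "\<xi> \<in> Yset DS \<Longrightarrow> \<xi> \<in> DA \<times> DS \<Longrightarrow> \<forall>e>0. \<exists>\<delta>>0. \<forall>h. 0 < h \<and> h < \<delta> \<longrightarrow>
            Yn (Ysm sm (complex_of_real (1 / h)) (T h \<xi> - \<xi>) - (- G0 \<xi>)) < e"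
  using Tgen[unfolded C0_semigroup_gen_def, THEN conjunct2, THEN conjunct2, THEN conjunct2, THEN conjunct2, THEN conjunct2, THEN conjunct2, THEN conjunct2] by blast

lemma DG_Y: "\<xi> \<in> DA \<times> DS \<Longrightarrow> \<xi> \<in> Yset DS"
  using DA_DS by (auto simp: Yset_iff)

lemma T_diff: "t \<ge> 0 \<Longrightarrow> \<xi> \<in> Yset DS \<Longrightarrow> \<eta> \<in> Yset DS \<Longrightarrow> T t (\<xi> - \<eta>) = T t \<xi> - T t \<eta>"
  using T_add[of t "\<xi> - \<eta>" \<eta>] by simp

lemma T_bdd: assumes "t \<ge> 0" shows "\<exists>M>0. \<forall>\<xi>\<in>Yset DS. Yn (T t \<xi>) \<le> M * Yn \<xi>"
proof -
  obtain M where M: "\<forall>\<xi>\<in>Yset DS. Yn (T t \<xi>) \<le> M * Yn \<xi>" using T_bdd0[OF assms] by blast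
  have "\<forall>\<xi>\<in>Yset DS. Yn (T t \<xi>) \<le> max M 1 * Yn \<xi>"
    using M Yn_nonneg by (meson max.cobounded1 mult_right_mono order_trans)
  then show ?thesis by (intro exI[of _ "max M 1"]) simp
qed

lemma G_fst: "fst (- G0 p) = sm (c * \<i>) (snd p)"
  by (simp add: Gop_def Ysm_def Hop_def Bhat_def Vop_def X.sm_assoc X.sm_minus_right X.sm_minus_left)

lemma G_snd: "snd (- G0 p) = - sm c (sm \<i> (A (fst p)) + - B (snd p) + sm \<i> (sm (complex_of_real (- \<epsilon>)) (fst p)))"
  by (simp add: Gop_def Ysm_def Hop_def Bhat_def Vop_def)

lemma G_Y: "p \<in> DA \<times> DS \<Longrightarrow> - G0 p \<in> Yset DS"
  unfolding Yset_iff G_fst by auto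

lemma deriv_T:
  assumes xi: "\<xi> \<in> DA \<times> DS" and t: "t \<ge> 0"
  shows "T t \<xi> \<in> DA \<times> DS \<and> (\<forall>e>0. \<exists>\<delta>>0. \<forall>h. 0 < h \<and> h < \<delta> \<longrightarrow>
            Yn (Ysm sm (complex_of_real (1 / h)) (T (t + h) \<xi> - T t \<xi>) - (- G0 (T t \<xi>))) < e)"
proof -
  have xY: "\<xi> \<in> Yset DS" using DG_Y xi .
  have TY: "T t \<xi> \<in> Yset DS" using T_Y t xY by blast
  obtain M where M: "M > 0" "\<forall>\<zeta>\<in>Yset DS. Yn (T t \<zeta>) \<le> M * Yn \<zeta>" using T_bdd[OF t] by blast
  have GY: "- G0 \<xi> \<in> Yset DS" using G_Y xi .
  have key: "Ysm sm (complex_of_real (1 / h)) (T h (T t \<xi>) - T t \<xi>) - T t (- G0 \<xi>)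
        = T t (Ysm sm (complex_of_real (1 / h)) (T h \<xi> - \<xi>) - (- G0 \<xi>))" if h: "h > 0" for h
  proof -
    have 4: "T h (T t \<xi>) = T t (T h \<xi>)"
      using T_comp[of h t \<xi>] T_comp[of t h \<xi>] h t xY by (simp add: add.commute)
    have hY: "T h \<xi> \<in> Yset DS" using T_Y h xY by simp
    have 1: "T t (Ysm sm (complex_of_real (1 / h)) (T h \<xi> - \<xi>) - (- G0 \<xi>))
        = T t (Ysm sm (complex_of_real (1 / h)) (T h \<xi> - \<xi>)) - T t (- G0 \<xi>)"
      by (rule T_diff) (use t hY xY GY in simp_all)
    have 2: "T t (Ysm sm (complex_of_real (1 / h)) (T h \<xi> - \<xi>)) = Ysm sm (complex_of_real (1 / h)) (T t (T h \<xi> - \<xi>))"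
      by (rule T_sm) (use t hY xY in simp_all)
    have 3: "T t (T h \<xi> - \<xi>) = T t (T h \<xi>) - T t \<xi>"
      by (rule T_diff) (use t hY xY in simp_all)
    show ?thesis by (simp only: 1 2 3 4)
  qed
  have conv: "\<forall>e>0. \<exists>\<delta>>0. \<forall>h. 0 < h \<and> h < \<delta> \<longrightarrow>
            Yn (Ysm sm (complex_of_real (1 / h)) (T h (T t \<xi>) - T t \<xi>) - T t (- G0 \<xi>)) < e"
  proof (intro allI impI)
    fix e :: real assume e: "e > 0"
    have eM: "e / M > 0" using e M(1) by simp
    obtain \<delta> where d: "\<delta> > 0" "\<forall>h. 0 < h \<and> h < \<delta> \<longrightarrow>
            Yn (Ysm sm (complex_of_real (1 / h)) (T h \<xi> - \<xi>) - (- G0 \<xi>)) < e / M"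
      using T_gen2[OF xY xi, rule_format, OF eM] by blast
    show "\<exists>\<delta>>0. \<forall>h. 0 < h \<and> h < \<delta> \<longrightarrow>
            Yn (Ysm sm (complex_of_real (1 / h)) (T h (T t \<xi>) - T t \<xi>) - T t (- G0 \<xi>)) < e"
    proof (intro exI conjI allI impI)
      show "\<delta> > 0" using d by simp
      fix h assume h: "0 < h \<and> h < \<delta>"
      have hY: "T h \<xi> \<in> Yset DS" using T_Y h xY by simp
      have W: "Ysm sm (complex_of_real (1 / h)) (T h \<xi> - \<xi>) - (- G0 \<xi>) \<in> Yset DS"
        by (rule Y_diff[OF Y_sm[OF Y_diff[OF hY xY]] GY])
      have "Yn (Ysm sm (complex_of_real (1 / h)) (T h (T t \<xi>) - T t \<xi>) - T t (- G0 \<xi>))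
          \<le> M * Yn (Ysm sm (complex_of_real (1 / h)) (T h \<xi> - \<xi>) - (- G0 \<xi>))"
        unfolding key[of h, OF conjunct1[OF h]] using M(2) W by blast
      also have "\<dots> < M * (e / M)"
      proof -
        have "Yn (Ysm sm (complex_of_real (1 / h)) (T h \<xi> - \<xi>) - (- G0 \<xi>)) < e / M" using d(2) h by blast
        then show ?thesis using M(1) by (rule mult_strict_left_mono)
      qed
      finally show "Yn (Ysm sm (complex_of_real (1 / h)) (T h (T t \<xi>) - T t \<xi>) - T t (- G0 \<xi>)) < e"
        using M(1) by simp
    qed
  qed
  have TG: "T t (- G0 \<xi>) \<in> Yset DS" using T_Y t GY by blast
  have "\<exists>L\<in>Yset DS. \<forall>e>0. \<exists>\<delta>>0. \<forall>h. 0 < h \<and> h < \<delta> \<longrightarrow>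
            Yn (Ysm sm (complex_of_real (1 / h)) (T h (T t \<xi>) - T t \<xi>) - L) < e"
    by (intro bexI[of _ "T t (- G0 \<xi>)"] conv TG)
  then have inDG: "T t \<xi> \<in> DA \<times> DS" using T_gen1[OF TY] by (rule iffD2[rotated])
  have G2: "\<forall>e>0. \<exists>\<delta>>0. \<forall>h. 0 < h \<and> h < \<delta> \<longrightarrow>
            Yn (Ysm sm (complex_of_real (1 / h)) (T h (T t \<xi>) - T t \<xi>) - (- G0 (T t \<xi>))) < e"
    using T_gen2[OF TY inDG] .
  have comp: "T h (T t \<xi>) = T (t + h) \<xi>" if "h > 0" for h
    using T_comp[of h t \<xi>] that t xY by (simp add: add.commute)
  have "\<forall>e>0. \<exists>\<delta>>0. \<forall>h. 0 < h \<and> h < \<delta> \<longrightarrow>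
            Yn (Ysm sm (complex_of_real (1 / h)) (T (t + h) \<xi> - T t \<xi>) - (- G0 (T t \<xi>))) < e"
  proof (intro allI impI)
    fix e :: real assume "e > 0"
    then obtain \<delta> where d: "\<delta> > 0" "\<forall>h. 0 < h \<and> h < \<delta> \<longrightarrow>
            Yn (Ysm sm (complex_of_real (1 / h)) (T h (T t \<xi>) - T t \<xi>) - (- G0 (T t \<xi>))) < e"
      using G2 by blast
    show "\<exists>\<delta>>0. \<forall>h. 0 < h \<and> h < \<delta> \<longrightarrow>
            Yn (Ysm sm (complex_of_real (1 / h)) (T (t + h) \<xi> - T t \<xi>) - (- G0 (T t \<xi>))) < e"
    proof (intro exI conjI allI impI)
      show "\<delta> > 0" by (rule d(1))
      fix h assume h: "0 < h \<and> h < \<delta>"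
      have "Yn (Ysm sm (complex_of_real (1 / h)) (T h (T t \<xi>) - T t \<xi>) - (- G0 (T t \<xi>))) < e"
        using d(2) h by blast
      then show "Yn (Ysm sm (complex_of_real (1 / h)) (T (t + h) \<xi> - T t \<xi>) - (- G0 (T t \<xi>))) < e"
        unfolding comp[OF conjunct1[OF h]] .
    qed
  qed
  then show ?thesis using inDG by blast
qed

lemma sigma_re: "Re (c * \<i> * cnj w) = Re (c * \<i> * w)"
  using c_cases by auto

lemma Ederiv_val:
  assumes u: "u \<in> DA" and v: "v \<in> DS"
  shows "2 * Re (ip (S u) (S (fst (- G0 (u, v))))) - \<epsilon> * (2 * Re (ip u (fst (- G0 (u, v)))))
       + 2 * Re (ip v (snd (- G0 (u, v)))) = 2 * Re (c * ip v (B v))"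
proof -
  have uS: "u \<in> DS" using DA_DS u .
  have Su: "S u \<in> DS" using DA_SDS u .
  have e1: "ip (S u) (S (fst (- G0 (u, v)))) = c * \<i> * ip (A u) v"
  proof -
    have "ip (S u) (S v) = ip (S (S u)) v" using S_sym[OF v Su] .
    then show ?thesis unfolding G_fst using S_sm[OF v] SSA[OF u] by (simp add: X.q_sm)
  qed
  have e2: "ip u (fst (- G0 (u, v))) = c * \<i> * ip u v"
    unfolding G_fst by (simp add: X.q_sm)
  have e3: "ip v (snd (- G0 (u, v))) = - (c * (\<i> * ip v (A u) - ip v (B v) + \<i> * (complex_of_real (- \<epsilon>) * ip v u)))"
    unfolding G_snd by (simp add: X.q_sm X.q_add X.q_minus_right X.q_diff_right)
  have h1: "ip v (A u) = cnj (ip (A u) v)" using X.q_herm[of "A u" v] by simp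
  have h2: "ip v u = cnj (ip u v)" using X.q_herm[of u v] by simp
  have "Re (ip v (snd (- G0 (u, v)))) = - Re (c * \<i> * cnj (ip (A u) v)) + Re (c * ip v (B v))
        + \<epsilon> * Re (c * \<i> * cnj (ip u v))"
    unfolding e3 h1 h2 by (simp add: algebra_simps)
  also have "Re (c * \<i> * cnj (ip (A u) v)) = Re (c * \<i> * ip (A u) v)" by (rule sigma_re)
  also have "Re (c * \<i> * cnj (ip u v)) = Re (c * \<i> * ip u v)" by (rule sigma_re)
  finally show ?thesis unfolding e1 e2 by simp
qed

end


locale traj = sg +
  fixes \<xi> :: "'a \<times> 'a"
  assumes xi: "\<xi> \<in> DA \<times> DS"
begin

definition "u r = fst (T r \<xi>)"
definition "v r = snd (T r \<xi>)"
definition "q r = - G0 (T r \<xi>)"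
definition "aa r = (nrm (S (u r)))^2"
definition "bb r = (nrm (u r))^2"
definition "cc r = (nrm (v r))^2"
definition "EE r = aa r - \<epsilon> * bb r + cc r"

lemma xiY: "\<xi> \<in> Yset DS" using DG_Y xi .

lemma Tuv: "T r \<xi> = (u r, v r)" unfolding u_def v_def by simp

lemma uv_dom: assumes "r \<ge> 0" shows "u r \<in> DA" "v r \<in> DS" "u r \<in> DS"
  using deriv_T[OF xi assms] DA_DS unfolding u_def v_def by (auto simp: mem_Times_iff)

lemma TY: "r \<ge> 0 \<Longrightarrow> T r \<xi> \<in> Yset DS" using T_Y xiY by blast

lemma q_fst: "fst (q r) = sm (c * \<i>) (v r)" unfolding q_def v_def by (rule G_fst)

lemma q_dom: "r \<ge> 0 \<Longrightarrow> fst (q r) \<in> DS" unfolding q_fst using uv_dom by simp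

lemma W_conv: assumes r: "r \<ge> 0"
  shows "\<forall>e>0. \<exists>\<delta>>0. \<forall>h. 0 < h \<and> h < \<delta> \<longrightarrow>
            Yn (Ysm sm (complex_of_real (1 / h)) (T (r + h) \<xi> - T r \<xi>) - q r) < e"
  using deriv_T[OF xi r] unfolding q_def by blast

lemma W_fst: "fst (Ysm sm (complex_of_real (1 / h)) (T (r + h) \<xi> - T r \<xi>) - q r)
   = sm (complex_of_real (1 / h)) (u (r + h) - u r) - fst (q r)"
  unfolding Ysm_def u_def by simp
lemma W_snd: "snd (Ysm sm (complex_of_real (1 / h)) (T (r + h) \<xi> - T r \<xi>) - q r)
   = sm (complex_of_real (1 / h)) (v (r + h) - v r) - snd (q r)"
  unfolding Ysm_def v_def by simp

lemma conv_weaken: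
  fixes F G :: "real \<Rightarrow> real" and K :: real
  assumes "\<forall>e>0. \<exists>\<delta>>0. \<forall>h. 0 < h \<and> h < \<delta> \<longrightarrow> F h < e"
  and "\<And>h. 0 < h \<Longrightarrow> G h \<le> K * F h" and "K > 0"
  shows "\<forall>e>0. \<exists>\<delta>>0. \<forall>h. 0 < h \<and> h < \<delta> \<longrightarrow> G h < e"
proof (intro allI impI)
  fix e :: real assume e: "e > 0"
  then obtain \<delta> where d: "\<delta> > 0" "\<forall>h. 0 < h \<and> h < \<delta> \<longrightarrow> F h < e / K" using assms(1,3)
    by (metis divide_pos_pos)
  show "\<exists>\<delta>>0. \<forall>h. 0 < h \<and> h < \<delta> \<longrightarrow> G h < e"
  proof (intro exI conjI allI impI)
    show "\<delta> > 0" by (rule d(1))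
    fix h assume h: "0 < h \<and> h < \<delta>"
    have "G h \<le> K * F h" using assms(2) h by simp
    also have "\<dots> < K * (e / K)"
    proof -
      have "F h < e / K" using d(2) h by blast
      then show ?thesis using assms(3) by (rule mult_strict_left_mono)
    qed
    finally show "G h < e" using assms(3) by simp
  qed
qed

lemma aa_deriv: assumes r: "r \<ge> 0"
  shows "(aa has_real_derivative 2 * Re (ip (S (u r)) (S (fst (q r))))) (at r within {r..})"
proof -
  have conv: "\<forall>e>0. \<exists>\<delta>>0. \<forall>h. 0 < h \<and> h < \<delta> \<longrightarrow>
     nrm (sm (complex_of_real (1/h)) (S (u (r+h)) - S (u r)) - S (fst (q r))) < e"
  proof (rule conv_weaken[OF W_conv[OF r], where K=1])
    fix h :: real assume h: "0 < h"
    have d: "u (r + h) \<in> DS" "u r \<in> DS" "fst (q r) \<in> DS" using uv_dom q_dom r h by simp_all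
    define Wv where "Wv = Ysm sm (complex_of_real (1 / h)) (T (r + h) \<xi> - T r \<xi>) - q r"
    have "sm (complex_of_real (1/h)) (S (u (r+h)) - S (u r)) - S (fst (q r)) = S (fst Wv)"
      unfolding Wv_def W_fst using d by (simp add: S_diff S_sm)
    moreover have "nrm (S (fst Wv)) \<le> Yn Wv" by (rule Yn_fst)
    ultimately show "nrm (sm (complex_of_real (1/h)) (S (u (r+h)) - S (u r)) - S (fst (q r)))
       \<le> 1 * Yn (Ysm sm (complex_of_real (1 / h)) (T (r + h) \<xi> - T r \<xi>) - q r)"
      unfolding Wv_def by simp
  qed simp
  have "aa = (\<lambda>r. (nrm (S (u r)))^2)" unfolding aa_def by simp
  then show ?thesis using rdv_deriv[OF sqn_rdv[OF conv]] by simp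
qed

lemma bb_deriv: assumes r: "r \<ge> 0"
  shows "(bb has_real_derivative 2 * Re (ip (u r) (fst (q r)))) (at r within {r..})"
proof -
  have se: "sqrt \<epsilon> > 0" using eps_pos by simp
  have conv: "\<forall>e>0. \<exists>\<delta>>0. \<forall>h. 0 < h \<and> h < \<delta> \<longrightarrow>
     nrm (sm (complex_of_real (1/h)) (u (r+h) - u r) - fst (q r)) < e"
  proof (rule conv_weaken[OF W_conv[OF r], where K="1 / sqrt \<epsilon>"])
    fix h :: real assume h: "0 < h"
    have d: "u (r + h) \<in> DS" "u r \<in> DS" "fst (q r) \<in> DS" using uv_dom q_dom r h by simp_all
    define w where "w = sm (complex_of_real (1/h)) (u (r+h) - u r) - fst (q r)"
    have wD: "w \<in> DS" unfolding w_def using d by simp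
    have "sqrt \<epsilon> * nrm w \<le> nrm (S w)" using lower[OF wD] .
    also have "\<dots> \<le> Yn (Ysm sm (complex_of_real (1 / h)) (T (r + h) \<xi> - T r \<xi>) - q r)"
      unfolding w_def W_fst[symmetric] by (rule Yn_fst)
    finally show "nrm (sm (complex_of_real (1/h)) (u (r+h) - u r) - fst (q r))
       \<le> 1 / sqrt \<epsilon> * Yn (Ysm sm (complex_of_real (1 / h)) (T (r + h) \<xi> - T r \<xi>) - q r)"
      unfolding w_def[symmetric] using se by (simp add: field_simps)
  qed (use se in simp)
  have "bb = (\<lambda>r. (nrm (u r))^2)" unfolding bb_def by simp
  then show ?thesis using rdv_deriv[OF sqn_rdv[OF conv]] by simp
qed

lemma cc_deriv: assumes r: "r \<ge> 0"
  shows "(cc has_real_derivative 2 * Re (ip (v r) (snd (q r)))) (at r within {r..})"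
proof -
  have conv: "\<forall>e>0. \<exists>\<delta>>0. \<forall>h. 0 < h \<and> h < \<delta> \<longrightarrow>
     nrm (sm (complex_of_real (1/h)) (v (r+h) - v r) - snd (q r)) < e"
  proof (rule conv_weaken[OF W_conv[OF r], where K=1])
    fix h :: real assume h: "0 < h"
    show "nrm (sm (complex_of_real (1/h)) (v (r+h) - v r) - snd (q r))
       \<le> 1 * Yn (Ysm sm (complex_of_real (1 / h)) (T (r + h) \<xi> - T r \<xi>) - q r)"
      using Yn_snd W_snd by (metis mult_1)
  qed simp
  have "cc = (\<lambda>r. (nrm (v r))^2)" unfolding cc_def by simp
  then show ?thesis using rdv_deriv[OF sqn_rdv[OF conv]] by simp
qed

definition "DE r = 2 * Re (c * ip (v r) (B (v r)))"

lemma EE_deriv: assumes r: "r \<ge> 0"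
  shows "(EE has_real_derivative DE r) (at r within {r..})"
proof -
  have "(EE has_real_derivative 2 * Re (ip (S (u r)) (S (fst (q r)))) - \<epsilon> * (2 * Re (ip (u r) (fst (q r))))
        + 2 * Re (ip (v r) (snd (q r)))) (at r within {r..})"
    unfolding EE_def[abs_def]
    by (intro DERIV_add DERIV_diff DERIV_cmult aa_deriv bb_deriv cc_deriv r)
  moreover have "q r = - G0 (u r, v r)" unfolding q_def Tuv ..
  ultimately show ?thesis unfolding DE_def using Ederiv_val[OF uv_dom(1)[OF r] uv_dom(2)[OF r]] by simp
qed

lemma EE_ge_cc: assumes r: "r \<ge> 0" shows "cc r \<le> EE r" "0 \<le> cc r"
proof -
  have "sqrt \<epsilon> * nrm (u r) \<le> nrm (S (u r))" using lower uv_dom(3)[OF r] by blast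
  then have "(sqrt \<epsilon> * nrm (u r))^2 \<le> (nrm (S (u r)))^2"
    using X.nq_nonneg eps_pos by (intro power_mono) simp_all
  then have "\<epsilon> * bb r \<le> aa r" unfolding aa_def bb_def using eps_pos by (simp add: power_mult_distrib)
  then show "cc r \<le> EE r" unfolding EE_def by simp
  show "0 \<le> cc r" unfolding cc_def by simp
qed

lemma DE_le: assumes r: "r \<ge> 0" shows "DE r \<le> 2 * \<mu> * EE r"
proof -
  have "Re (c * ip (v r) (B (v r))) \<le> \<mu> * (nrm (v r))^2" using Bbound uv_dom(2)[OF r] by blast
  then have "DE r \<le> 2 * (\<mu> * cc r)" unfolding DE_def cc_def by simp
  also have "\<dots> \<le> 2 * \<mu> * EE r" using EE_ge_cc[OF r] mu_nonneg by (simp add: mult_left_mono)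
  finally show ?thesis .
qed


lemma cont_gen:
  fixes f :: "real \<Rightarrow> real"
  assumes bnd: "\<And>r r0. r \<ge> 0 \<Longrightarrow> r0 \<ge> 0 \<Longrightarrow> \<bar>f r - f r0\<bar> \<le> K * Yn (T r \<xi> - T r0 \<xi>)" and K: "K > 0"
  shows "continuous_on {0..} f"
  unfolding continuous_on_iff
proof (intro ballI allI impI)
  fix x :: real and e :: real assume x: "x \<in> {0..}" and e: "e > 0"
  have eK: "e / K > 0" using e K by simp
  obtain \<delta> where d: "\<delta> > 0" "\<forall>s\<ge>0. \<bar>s - x\<bar> < \<delta> \<longrightarrow> Yn (T s \<xi> - T x \<xi>) < e / K"
    using T_cont[OF xiY _ eK, of x] x by auto
  show "\<exists>d>0. \<forall>x'\<in>{0..}. dist x' x < d \<longrightarrow> dist (f x') (f x) < e"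
  proof (intro exI conjI ballI impI)
    show "\<delta> > 0" by (rule d(1))
    fix x' :: real assume x': "x' \<in> {0..}" and dx: "dist x' x < \<delta>"
    have "Yn (T x' \<xi> - T x \<xi>) < e / K" using d(2) x' dx unfolding dist_real_def by simp
    then have "K * Yn (T x' \<xi> - T x \<xi>) < K * (e / K)" using K by (rule mult_strict_left_mono)
    then have "K * Yn (T x' \<xi> - T x \<xi>) < e" using K by simp
    moreover have "\<bar>f x' - f x\<bar> \<le> K * Yn (T x' \<xi> - T x \<xi>)" using bnd x x' by simp
    ultimately show "dist (f x') (f x) < e" unfolding dist_real_def by linarith
  qed
qed

lemma cont_Su: "continuous_on {0..} (\<lambda>r. nrm (S (u r)))"
proof (rule cont_gen[where K=1])
  fix r r0 :: real assume r: "r \<ge> 0" and r0: "r0 \<ge> 0"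
  have "\<bar>nrm (S (u r)) - nrm (S (u r0))\<bar> \<le> nrm (S (u r) - S (u r0))" by (rule X.rev_tri) simp_all
  also have "S (u r) - S (u r0) = S (fst (T r \<xi> - T r0 \<xi>))"
    using S_diff uv_dom(3)[OF r] uv_dom(3)[OF r0] unfolding u_def by simp
  also have "nrm (S (fst (T r \<xi> - T r0 \<xi>))) \<le> Yn (T r \<xi> - T r0 \<xi>)" by (rule Yn_fst)
  finally show "\<bar>nrm (S (u r)) - nrm (S (u r0))\<bar> \<le> 1 * Yn (T r \<xi> - T r0 \<xi>)" by simp
qed simp

lemma cont_u: "continuous_on {0..} (\<lambda>r. nrm (u r))"
proof (rule cont_gen[where K="1 / sqrt \<epsilon>"])
  fix r r0 :: real assume r: "r \<ge> 0" and r0: "r0 \<ge> 0"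
  have se: "sqrt \<epsilon> > 0" using eps_pos by simp
  have w: "u r - u r0 \<in> DS" using uv_dom(3)[OF r] uv_dom(3)[OF r0] by simp
  have "\<bar>nrm (u r) - nrm (u r0)\<bar> \<le> nrm (u r - u r0)" by (rule X.rev_tri) simp_all
  moreover have "sqrt \<epsilon> * nrm (u r - u r0) \<le> nrm (S (u r - u r0))" by (rule lower[OF w])
  moreover have "S (u r - u r0) = S (fst (T r \<xi> - T r0 \<xi>))" unfolding u_def by simp
  moreover have "nrm (S (fst (T r \<xi> - T r0 \<xi>))) \<le> Yn (T r \<xi> - T r0 \<xi>)" by (rule Yn_fst)
  ultimately have "sqrt \<epsilon> * \<bar>nrm (u r) - nrm (u r0)\<bar> \<le> Yn (T r \<xi> - T r0 \<xi>)"
    using se by (smt (verit) mult_left_mono)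
  then show "\<bar>nrm (u r) - nrm (u r0)\<bar> \<le> 1 / sqrt \<epsilon> * Yn (T r \<xi> - T r0 \<xi>)"
    using se by (simp add: field_simps)
qed (use eps_pos in simp)

lemma cont_v: "continuous_on {0..} (\<lambda>r. nrm (v r))"
proof (rule cont_gen[where K=1])
  fix r r0 :: real assume r: "r \<ge> 0" and r0: "r0 \<ge> 0"
  have "\<bar>nrm (v r) - nrm (v r0)\<bar> \<le> nrm (v r - v r0)" by (rule X.rev_tri) simp_all
  also have "v r - v r0 = snd (T r \<xi> - T r0 \<xi>)" unfolding v_def by simp
  also have "nrm (snd (T r \<xi> - T r0 \<xi>)) \<le> Yn (T r \<xi> - T r0 \<xi>)" by (rule Yn_snd)
  finally show "\<bar>nrm (v r) - nrm (v r0)\<bar> \<le> 1 * Yn (T r \<xi> - T r0 \<xi>)" by simp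
qed simp

lemma cont_bb: "continuous_on {0..} bb"
proof -
  have "bb = (\<lambda>r. (nrm (u r))^2)" unfolding bb_def by simp
  then show ?thesis using continuous_on_power[OF cont_u] by simp
qed

lemma cont_EE: "continuous_on {0..} EE"
proof -
  have "EE = (\<lambda>r. (nrm (S (u r)))^2 - \<epsilon> * (nrm (u r))^2 + (nrm (v r))^2)"
    unfolding EE_def aa_def bb_def cc_def by simp
  then show ?thesis
    using continuous_on_add[OF continuous_on_diff[OF continuous_on_power[OF cont_Su]
          continuous_on_mult[OF continuous_on_const continuous_on_power[OF cont_u]]] continuous_on_power[OF cont_v]]
    by simp
qed

lemma EE_bound: assumes t: "t \<ge> 0" shows "EE t \<le> exp (2 * \<mu> * t) * EE 0"
proof -
  define g where "g r = exp (- (2 * \<mu> * r)) * EE r" for r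
  have "g t \<le> g 0"
  proof (rule rd_mono[OF t])
    have "continuous_on {0..} g" unfolding g_def[abs_def]
      by (intro continuous_on_mult cont_EE continuous_intros)
    then show "continuous_on {0..t} g" by (rule continuous_on_subset) auto
    fix x assume x: "0 \<le> x" "x < t"
    have D: "(g has_real_derivative exp (- (2 * \<mu> * x)) * (DE x - 2 * \<mu> * EE x)) (at x within {x..})"
      unfolding g_def[abs_def] by (rule exp_weight_deriv[OF EE_deriv[OF x(1)]])
    have "exp (- (2 * \<mu> * x)) * (DE x - 2 * \<mu> * EE x) \<le> 0"
      using DE_le[OF x(1)] by (simp add: mult_nonneg_nonpos)
    then show "\<forall>e>0. \<exists>\<delta>>0. \<forall>h. 0 < h \<and> h < \<delta> \<longrightarrow> g (x + h) \<le> g x + e * h"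
      by (rule deriv_dini[OF D])
  qed
  then have "exp (- (2 * \<mu> * t)) * EE t \<le> EE 0" unfolding g_def by simp
  then have "exp (2 * \<mu> * t) * (exp (- (2 * \<mu> * t)) * EE t) \<le> exp (2 * \<mu> * t) * EE 0"
    by (rule mult_left_mono) simp
  moreover have "exp (2 * \<mu> * t) * exp (- (2 * \<mu> * t)) = 1" by (simp flip: exp_add)
  ultimately show ?thesis by (simp add: mult.assoc[symmetric])
qed

lemma EE0_nonneg: "0 \<le> EE 0" using EE_ge_cc[of 0] by simp

lemma v_bound: assumes x: "0 \<le> x" "x \<le> t" shows "nrm (v x) \<le> exp (\<mu> * t) * sqrt (EE 0)"
proof -
  have "nrm (v x) = sqrt (cc x)" unfolding cc_def using X.nq_nonneg by simp
  also have "\<dots> \<le> sqrt (EE x)" using EE_ge_cc[OF x(1)] by simp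
  also have "\<dots> \<le> sqrt (exp (2 * \<mu> * x) * EE 0)" using EE_bound[OF x(1)] by simp
  also have "\<dots> = exp (\<mu> * x) * sqrt (EE 0)"
  proof -
    have "exp (2 * \<mu> * x) = (exp (\<mu> * x))^2" by (simp flip: exp_double add: mult.assoc)
    then show ?thesis by (simp add: real_sqrt_mult)
  qed
  also have "\<dots> \<le> exp (\<mu> * t) * sqrt (EE 0)"
    using x mu_nonneg EE0_nonneg by (intro mult_right_mono) (simp_all add: mult_left_mono)
  finally show ?thesis .
qed

lemma u_bound: assumes t: "t \<ge> 0" shows "nrm (u t) \<le> nrm (u 0) + exp (\<mu> * t) * sqrt (EE 0) * t"
proof (rule field_le_epsilon)
  fix e :: real assume e: "0 < e"
  define K where "K = exp (\<mu> * t) * sqrt (EE 0)"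
  define \<delta> where "\<delta> = e^2"
  have dpos: "\<delta> > 0" unfolding \<delta>_def using e by simp
  define k where "k r = sqrt (bb r + \<delta>) - K * r" for r
  have bbn: "bb r \<ge> 0" for r unfolding bb_def by simp
  have "k t \<le> k 0"
  proof (rule rd_mono[OF t])
    have "continuous_on {0..} k" unfolding k_def[abs_def]
      by (intro continuous_on_diff continuous_on_real_sqrt continuous_on_add cont_bb continuous_intros)
    then show "continuous_on {0..t} k" by (rule continuous_on_subset) auto
    fix x assume x: "0 \<le> x" "x < t"
    have pos: "bb x + \<delta> > 0" using bbn dpos by (simp add: add_nonneg_pos)
    have D: "(k has_real_derivative inverse (sqrt (bb x + \<delta>)) / 2 * (2 * Re (ip (u x) (fst (q x)))) - K * 1) (at x within {x..})"
      unfolding k_def[abs_def] by (rule sqrt_deriv[OF bb_deriv[OF x(1)] pos])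
    have Db: "Re (ip (u x) (fst (q x))) \<le> nrm (u x) * nrm (v x)"
    proof -
      have "ip (u x) (fst (q x)) = c * \<i> * ip (u x) (v x)" unfolding q_fst by (simp add: X.q_sm)
      moreover have "cmod (c * \<i>) = 1" using c_cases by auto
      ultimately have "cmod (ip (u x) (fst (q x))) = cmod (ip (u x) (v x))" by (simp add: norm_mult)
      then have "Re (ip (u x) (fst (q x))) \<le> cmod (ip (u x) (v x))" using complex_Re_le_cmod by metis
      also have "\<dots> \<le> nrm (u x) * nrm (v x)" by (rule X.CS) simp_all
      finally show ?thesis .
    qed
    have iv: "inverse (sqrt (bb x + \<delta>)) \<ge> 0" using less_imp_le[OF pos] by simp
    have "inverse (sqrt (bb x + \<delta>)) / 2 * (2 * Re (ip (u x) (fst (q x))))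
        = inverse (sqrt (bb x + \<delta>)) * Re (ip (u x) (fst (q x)))" by simp
    also have "\<dots> \<le> inverse (sqrt (bb x + \<delta>)) * (nrm (u x) * nrm (v x))"
      using Db iv by (rule mult_left_mono)
    also have "\<dots> = (nrm (u x) * inverse (sqrt (bb x + \<delta>))) * nrm (v x)" by simp
    also have "\<dots> \<le> 1 * nrm (v x)"
    proof (rule mult_right_mono)
      have "nrm (u x) \<le> sqrt (bb x + \<delta>)"
      proof -
        have "nrm (u x) = sqrt (bb x)" unfolding bb_def using X.nq_nonneg by simp
        also have "\<dots> \<le> sqrt (bb x + \<delta>)" using dpos by simp
        finally show ?thesis .
      qed
      then show "nrm (u x) * inverse (sqrt (bb x + \<delta>)) \<le> 1"
        using pos less_imp_le[OF pos] by (simp add: field_simps)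
    qed (simp add: X.nq_nonneg)
    also have "\<dots> \<le> K" unfolding K_def using v_bound[of x t] x by simp
    finally show "\<forall>e>0. \<exists>\<delta>>0. \<forall>h. 0 < h \<and> h < \<delta> \<longrightarrow> k (x + h) \<le> k x + e * h"
      by (intro deriv_dini[OF D]) simp
  qed
  then have "sqrt (bb t + \<delta>) \<le> sqrt (bb 0 + \<delta>) + K * t" unfolding k_def by simp
  moreover have "nrm (u t) \<le> sqrt (bb t + \<delta>)"
  proof -
    have "nrm (u t) = sqrt (bb t)" unfolding bb_def using X.nq_nonneg by simp
    also have "\<dots> \<le> sqrt (bb t + \<delta>)" using dpos by simp
    finally show ?thesis .
  qed
  moreover have "sqrt (bb 0 + \<delta>) \<le> nrm (u 0) + e"
  proof -
    have "sqrt (bb 0 + \<delta>) \<le> sqrt (bb 0) + sqrt \<delta>" by (rule sqrt_add_le_add_sqrt) (simp_all add: bbn dpos less_imp_le)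
    also have "sqrt (bb 0) = nrm (u 0)" unfolding bb_def using X.nq_nonneg by simp
    also have "sqrt \<delta> = e" unfolding \<delta>_def using e by simp
    finally show ?thesis .
  qed
  ultimately show "nrm (u t) \<le> nrm (u 0) + exp (\<mu> * t) * sqrt (EE 0) * t + e" unfolding K_def by linarith
qed

end


lemma final_ineq:
  fixes x0 y0 s m Y P :: real
  assumes x0: "x0 \<ge> 0" and y0: "y0 \<ge> 0" and s: "s \<ge> 1" and m: "m \<ge> 1"
    and Y: "Y^2 = x0^2 + y0^2" "Y \<ge> 0"
    and P: "P \<le> m^2 * x0^2 + (y0 + m * s * x0)^2"
  shows "P \<le> (exp 1 * s * m * Y)^2"
proof -
  have "y0 + m * s * x0 \<le> m * (y0 + s * x0)"
    using y0 m by (simp add: distrib_left mult.assoc mult_le_cancel_right1 mult_left_le_one_le)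
  then have "(y0 + m * s * x0)^2 \<le> (m * (y0 + s * x0))^2"
    using x0 y0 s m by (intro power_mono) simp_all
  also have "\<dots> = m^2 * (y0 + s * x0)^2" by (simp add: power_mult_distrib)
  also have "(y0 + s * x0)^2 \<le> 2 * y0^2 + 2 * (s * x0)^2"
  proof -
    have "0 \<le> (y0 - s * x0)^2" by simp
    then show ?thesis by (simp add: power2_eq_square algebra_simps)
  qed
  finally have "P \<le> m^2 * x0^2 + m^2 * (2 * y0^2 + 2 * (s * x0)^2)"
    using P by (smt (verit) mult_left_mono zero_le_power2)
  also have "\<dots> = m^2 * (x0^2 + 2 * y0^2 + 2 * s^2 * x0^2)" by (simp add: algebra_simps power_mult_distrib)
  also have "x0^2 + 2 * y0^2 + 2 * s^2 * x0^2 \<le> 3 * s^2 * (x0^2 + y0^2)"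
  proof -
    have s2: "1 \<le> s^2" using s by (simp add: one_le_power)
    have "1 * x0^2 \<le> s^2 * x0^2" using s2 by (rule mult_right_mono) simp
    moreover have "2 * y0^2 \<le> (3 * s^2) * y0^2" using s2 by (intro mult_right_mono) simp_all
    ultimately show ?thesis by (simp add: algebra_simps)
  qed
  then have "m^2 * (x0^2 + 2 * y0^2 + 2 * s^2 * x0^2) \<le> m^2 * (3 * s^2 * (x0^2 + y0^2))"
    by (rule mult_left_mono) simp
  also have "\<dots> = 3 * (s^2 * m^2 * Y^2)" using Y by (simp add: algebra_simps)
  also have "\<dots> \<le> (exp 1)^2 * (s^2 * m^2 * Y^2)"
  proof (rule mult_right_mono)
    have "2 \<le> exp (1::real)" using exp_ge_add_one_self[of 1] by simp
    then have "2^2 \<le> (exp (1::real))^2" by (rule power_mono) simp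
    then show "3 \<le> (exp (1::real))^2" by simp
  qed simp
  also have "\<dots> = (exp 1 * s * m * Y)^2" by (simp add: power_mult_distrib)
  finally show ?thesis .
qed

context traj
begin

lemma final_DG: assumes t: "1 / sqrt \<epsilon> \<le> t"
  shows "Yn (T t \<xi>) \<le> exp 1 * sqrt \<epsilon> * t * exp (\<mu> * t) * Yn \<xi>"
proof -
  have se: "sqrt \<epsilon> > 0" using eps_pos by simp
  have "1 / sqrt \<epsilon> > 0" using se by simp
  then have tpos: "t > 0" using t by linarith
  define s0 where "s0 = sqrt \<epsilon> * t"
  have s0: "s0 \<ge> 1"
  proof -
    have "sqrt \<epsilon> * (1 / sqrt \<epsilon>) \<le> sqrt \<epsilon> * t" by (rule mult_left_mono[OF t]) (use se in simp)
    then show ?thesis unfolding s0_def using se by simp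
  qed
  define m where "m = exp (\<mu> * t)"
  have m: "m \<ge> 1" unfolding m_def using mu_nonneg tpos by simp
  define x0 where "x0 = sqrt (EE 0)"
  define y0 where "y0 = sqrt \<epsilon> * nrm (u 0)"
  have x0: "x0 \<ge> 0" and y0: "y0 \<ge> 0" unfolding x0_def y0_def using EE0_nonneg X.nq_nonneg eps_pos by simp_all
  have T0: "T 0 \<xi> = \<xi>" using T_zero xiY by blast
  have u0: "u 0 = fst \<xi>" and v0: "v 0 = snd \<xi>" unfolding u_def v_def T0 by simp_all
  have Yxi: "(Yn \<xi>)^2 = x0^2 + y0^2"
  proof -
    have "(Yn \<xi>)^2 = aa 0 + cc 0" unfolding Yn_sq aa_def cc_def u0 v0 by simp
    also have "\<dots> = EE 0 + \<epsilon> * bb 0" unfolding EE_def by simp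
    also have "EE 0 = x0^2" unfolding x0_def using EE0_nonneg by simp
    also have "\<epsilon> * bb 0 = y0^2" unfolding y0_def bb_def using eps_pos by (simp add: power_mult_distrib)
    finally show ?thesis .
  qed
  have P: "(Yn (T t \<xi>))^2 \<le> m^2 * x0^2 + (y0 + m * s0 * x0)^2"
  proof -
    have "(Yn (T t \<xi>))^2 = aa t + cc t" unfolding Yn_sq aa_def cc_def u_def v_def by simp
    also have "\<dots> = EE t + \<epsilon> * bb t" unfolding EE_def by simp
    also have "EE t \<le> m^2 * x0^2"
    proof -
      have "exp (2 * \<mu> * t) = m^2" unfolding m_def by (simp flip: exp_double add: mult.assoc)
      then show ?thesis using EE_bound[of t] tpos EE0_nonneg unfolding x0_def by simp
    qed
    also have "\<epsilon> * bb t \<le> (y0 + m * s0 * x0)^2"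
    proof -
      have "nrm (u t) \<le> nrm (u 0) + m * x0 * t" using u_bound[of t] tpos unfolding m_def x0_def by simp
      then have "sqrt \<epsilon> * nrm (u t) \<le> sqrt \<epsilon> * (nrm (u 0) + m * x0 * t)" using se by simp
      also have "\<dots> = y0 + m * s0 * x0" unfolding y0_def s0_def by (simp add: algebra_simps)
      finally have "(sqrt \<epsilon> * nrm (u t))^2 \<le> (y0 + m * s0 * x0)^2"
        using se X.nq_nonneg by (intro power_mono) simp_all
      then show ?thesis unfolding bb_def using eps_pos by (simp add: power_mult_distrib)
    qed
    finally show ?thesis by simp
  qed
  have "(Yn (T t \<xi>))^2 \<le> (exp 1 * s0 * m * Yn \<xi>)^2"
    by (rule final_ineq[OF x0 y0 s0 m Yxi Yn_nonneg P])
  then have "Yn (T t \<xi>) \<le> exp 1 * s0 * m * Yn \<xi>"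
    by (rule power2_le_imp_le) (use s0 m Yn_nonneg in simp_all)
  then show ?thesis unfolding s0_def m_def by (simp add: mult.assoc)
qed

end

context sg
begin

lemma bound_DG: assumes xi: "\<eta> \<in> DA \<times> DS" and t: "1 / sqrt \<epsilon> \<le> t"
  shows "Yn (T t \<eta>) \<le> exp 1 * sqrt \<epsilon> * t * exp (\<mu> * t) * Yn \<eta>"
proof -
  interpret tr: traj sm ip DA A DS S \<epsilon> B c T \<mu> \<eta> by unfold_locales (rule xi)
  show ?thesis using tr.final_DG[OF t] .
qed

lemma main_bound: assumes z: "\<zeta> \<in> Yset DS" and t: "1 / sqrt \<epsilon> \<le> t"
  shows "Yn (T t \<zeta>) \<le> exp 1 * sqrt \<epsilon> * t * exp (\<mu> * t) * Yn \<zeta>"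
proof (rule field_le_epsilon)
  fix e :: real assume e: "0 < e"
  define K0 where "K0 = exp 1 * sqrt \<epsilon> * t * exp (\<mu> * t)"
  have se: "sqrt \<epsilon> > 0" using eps_pos by simp
  have "1 / sqrt \<epsilon> > 0" using se by simp
  then have tpos: "t > 0" using t by linarith
  have K0: "K0 \<ge> 0" unfolding K0_def using tpos se by simp
  obtain M where M: "M > 0" "\<forall>\<xi>\<in>Yset DS. Yn (T t \<xi>) \<le> M * Yn \<xi>" using T_bdd[OF less_imp_le[OF tpos]] by blast
  define e' where "e' = e / (2 * (K0 + M) + 1)"
  have den: "2 * (K0 + M) + 1 > 0" using K0 M by simp
  have e': "e' > 0" unfolding e'_def using e den by simp
  have z1: "fst \<zeta> \<in> DS" using z by (simp add: Yset_iff)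
  obtain \<phi> where \<phi>: "\<phi> \<in> DA" "hnorm gip (fst \<zeta> - \<phi>) < e'" using DA_gdense[OF z1 e'] by blast
  obtain \<psi> where \<psi>: "\<psi> \<in> DS" "nrm (snd \<zeta> - \<psi>) < e'" using DS_dense[OF e'] by blast
  define \<eta> where "\<eta> = (\<phi>, \<psi>)"
  have eta: "\<eta> \<in> DA \<times> DS" unfolding \<eta>_def using \<phi> \<psi> by simp
  have etaY: "\<eta> \<in> Yset DS" using DG_Y eta .
  have dY: "\<zeta> - \<eta> \<in> Yset DS" using z etaY by simp
  have dn: "Yn (\<zeta> - \<eta>) \<le> 2 * e'"
  proof -
    have "Yn (\<zeta> - \<eta>) \<le> nrm (S (fst (\<zeta> - \<eta>))) + nrm (snd (\<zeta> - \<eta>))" by (rule Yn_le)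
    also have "nrm (S (fst (\<zeta> - \<eta>))) \<le> hnorm gip (fst \<zeta> - \<phi>)" unfolding \<eta>_def using gnorm_ge2 by simp
    also have "nrm (snd (\<zeta> - \<eta>)) = nrm (snd \<zeta> - \<psi>)" unfolding \<eta>_def by simp
    finally show ?thesis using \<phi>(2) \<psi>(2) by simp
  qed
  have "T t \<zeta> = T t \<eta> + T t (\<zeta> - \<eta>)" using T_add[of t \<eta> "\<zeta> - \<eta>"] tpos etaY dY by simp
  then have "Yn (T t \<zeta>) \<le> Yn (T t \<eta>) + Yn (T t (\<zeta> - \<eta>))"
    using Yn_tri T_Y tpos etaY dY by simp
  also have "Yn (T t \<eta>) \<le> K0 * Yn \<eta>" unfolding K0_def by (rule bound_DG[OF eta t])
  also have "Yn (T t (\<zeta> - \<eta>)) \<le> M * Yn (\<zeta> - \<eta>)" using M(2) dY by blast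
  also have "Yn \<eta> \<le> Yn \<zeta> + Yn (\<zeta> - \<eta>)"
  proof -
    have d2: "\<eta> - \<zeta> \<in> Yset DS" using z etaY by simp
    have "Yn (\<zeta> + (\<eta> - \<zeta>)) \<le> Yn \<zeta> + Yn (\<eta> - \<zeta>)" by (rule Yn_tri[OF z d2])
    moreover have "Yn (\<eta> - \<zeta>) = Yn (\<zeta> - \<eta>)" by (rule Yn_commute[OF etaY z])
    ultimately show ?thesis by simp
  qed
  finally have "Yn (T t \<zeta>) \<le> K0 * (Yn \<zeta> + Yn (\<zeta> - \<eta>)) + M * Yn (\<zeta> - \<eta>)"
    using K0 by (simp add: mult_left_mono)
  also have "\<dots> = K0 * Yn \<zeta> + (K0 + M) * Yn (\<zeta> - \<eta>)" by (simp add: algebra_simps)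
  also have "(K0 + M) * Yn (\<zeta> - \<eta>) \<le> (K0 + M) * (2 * e')" using dn K0 M by (intro mult_left_mono) simp_all
  also have "(K0 + M) * (2 * e') \<le> e"
  proof -
    have "(K0 + M) * (2 * e') = (2 * (K0 + M)) * e'" by simp
    also have "\<dots> \<le> (2 * (K0 + M) + 1) * e'" using e' by (intro mult_right_mono) simp_all
    also have "\<dots> = e" unfolding e'_def using den by simp
    finally show ?thesis .
  qed
  finally show "Yn (T t \<zeta>) \<le> exp 1 * sqrt \<epsilon> * t * exp (\<mu> * t) * Yn \<zeta> + e" unfolding K0_def by simp
qed

end


context setting
begin

lemma opn_facts:
  assumes bd: "bounded_on ip DS B" and lin: "linear_op sm DS B"
  shows "0 \<le> op_norm ip DS B" "\<And>v. v \<in> DS \<Longrightarrow> nrm (B v) \<le> op_norm ip DS B * nrm v"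
proof -
  define F where "F = {hnorm ip (B \<xi>) | \<xi>. \<xi> \<in> DS \<and> hnorm ip \<xi> \<le> 1}"
  obtain M where M: "\<forall>\<xi>\<in>DS. nrm (B \<xi>) \<le> M * nrm \<xi>" using bd unfolding bounded_on_def by blast
  have bdd: "bdd_above F" unfolding F_def
  proof (rule bdd_aboveI[of _ "\<bar>M\<bar>"])
    fix x assume "x \<in> {hnorm ip (B \<xi>) | \<xi>. \<xi> \<in> DS \<and> hnorm ip \<xi> \<le> 1}"
    then obtain \<xi> where x: "x = nrm (B \<xi>)" "\<xi> \<in> DS" "nrm \<xi> \<le> 1" by blast
    have "nrm (B \<xi>) \<le> M * nrm \<xi>" using M x(2) by blast
    also have "\<dots> \<le> \<bar>M\<bar> * nrm \<xi>" using X.nq_nonneg by (simp add: mult_right_mono)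
    also have "\<dots> \<le> \<bar>M\<bar> * 1" using x(3) by (intro mult_left_mono) simp_all
    finally show "x \<le> \<bar>M\<bar>" using x(1) by simp
  qed
  have B0: "B 0 = 0" using X.lin_zero[OF lin] .
  have "0 = nrm (B 0) \<and> 0 \<in> DS \<and> nrm 0 \<le> 1" using B0 by simp
  then have "0 \<in> F" unfolding F_def by blast
  then show "0 \<le> op_norm ip DS B" unfolding op_norm_def F_def[symmetric] using bdd by (rule cSup_upper)
  fix v assume v: "v \<in> DS"
  show "nrm (B v) \<le> op_norm ip DS B * nrm v"
  proof (cases "v = 0")
    case True then show ?thesis using B0 by simp
  next
    case False
    have nv: "nrm v > 0" using False X.nq_eq0[of v] X.nq_nonneg[of v] by simp
    define w where "w = sm (complex_of_real (1 / nrm v)) v"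
    have wD: "w \<in> DS" unfolding w_def using v by simp
    have nw: "nrm w = 1" unfolding w_def using X.nq_sm[of v] nv by (simp add: norm_divide)
    have Bw: "nrm (B w) = nrm (B v) / nrm v"
      unfolding w_def using X.lin_sm[OF lin v] X.nq_sm[of "B v"] nv by (simp add: norm_divide)
    have "nrm (B w) \<in> F" unfolding F_def using wD nw by force
    then have "nrm (B w) \<le> op_norm ip DS B" unfolding op_norm_def F_def[symmetric] using bdd by (rule cSup_upper)
    then have "nrm (B v) / nrm v \<le> op_norm ip DS B" using Bw by simp
    then show ?thesis using nv by (simp add: divide_le_eq)
  qed
qed

lemma bdd_Re:
  assumes bd: "bounded_on ip DS B" and lin: "linear_op sm DS B" and c: "c = \<i> \<or> c = - \<i>"
  shows "\<forall>v\<in>DS. Re (c * ip v (B v)) \<le> op_norm ip DS B * (nrm v)^2"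
proof
  fix v assume v: "v \<in> DS"
  have "Re (c * ip v (B v)) \<le> cmod (c * ip v (B v))" by (rule complex_Re_le_cmod)
  also have "\<dots> = cmod (ip v (B v))" using c by (auto simp: norm_mult)
  also have "\<dots> \<le> nrm v * nrm (B v)" by (rule X.CS) simp_all
  also have "\<dots> \<le> nrm v * (op_norm ip DS B * nrm v)"
    using opn_facts(2)[OF bd lin v] X.nq_nonneg by (simp add: mult_left_mono)
  finally show "Re (c * ip v (B v)) \<le> op_norm ip DS B * (nrm v)^2" by (simp add: power2_eq_square algebra_simps)
qed

lemma sym_Re:
  assumes sym: "symmetric_on ip DS B" and c: "c = \<i> \<or> c = - \<i>"
  shows "\<forall>v\<in>DS. Re (c * ip v (B v)) \<le> 0 * (nrm v)^2"
proof
  fix v assume v: "v \<in> DS"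
  have "ip (B v) v = ip v (B v)" using sym v unfolding symmetric_on_def by blast
  moreover have "ip (B v) v = cnj (ip v (B v))" using X.q_herm[of v "B v"] by simp
  ultimately have "Im (ip v (B v)) = 0" by (metis cnj.sel(2) neg_equal_zero)
  then show "Re (c * ip v (B v)) \<le> 0 * (nrm v)^2" using c by auto
qed

end

theorem theorem16:
  fixes sm :: "complex \<Rightarrow> 'x::ab_group_add \<Rightarrow> 'x"
    and ip :: "'x \<Rightarrow> 'x \<Rightarrow> complex"
    and DA :: "'x set" and A :: "'x \<Rightarrow> 'x"
    and DA0 :: "'x set" and A0 :: "'x \<Rightarrow> 'x"
    and DS :: "'x set" and S :: "'x \<Rightarrow> 'x"
    and B :: "'x \<Rightarrow> 'x"
    and \<epsilon> a b :: real
    and Tp Tm :: "real \<Rightarrow> 'x \<times> 'x \<Rightarrow> 'x \<times> 'x"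
  assumes hilb: "complex_hilbert sm ip"
    and nontriv: "\<exists>x::'x. x \<noteq> 0"
    and eps_pos: "\<epsilon> > 0"
    and A_sa: "self_adjoint sm ip DA A"
    and A_lower: "\<forall>\<xi>\<in>DA. Re (ip \<xi> (A \<xi>)) \<ge> \<epsilon> * Re (ip \<xi> \<xi>)"
    and A0_sa: "self_adjoint sm ip DA0 A0"
    and A0_pos: "positive_op ip DA0 A0"
    and A_eq: "DA = DA0" "\<forall>\<xi>\<in>DA. A \<xi> = A0 \<xi> + sm (complex_of_real \<epsilon>) \<xi>"
    and sqrtA: "is_pos_sqrt sm ip DS S DA A"
    and B_lin: "linear_op sm DS B"
    and ab: "0 \<le> a" "a < 1"
    and B_rel: "\<forall>\<xi>\<in>DS. (hnorm ip (B \<xi>))\<^sup>2 \<le> a\<^sup>2 * (hnorm ip (S \<xi>))\<^sup>2 + b\<^sup>2 * (hnorm ip \<xi>)\<^sup>2"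
    and B_sym_or_bdd: "symmetric_on ip DS B \<or> bounded_on ip DS B"
    and Tp_gen: "C0_semigroup_gen sm ip DS S (DA \<times> DS)
                   (Gop sm (- \<i>) A B (\<lambda>\<xi>. sm (complex_of_real (- \<epsilon>)) \<xi>)) Tp"
    and Tm_gen: "C0_semigroup_gen sm ip DS S (DA \<times> DS)
                   (Gop sm \<i> A B (\<lambda>\<xi>. sm (complex_of_real (- \<epsilon>)) \<xi>)) Tm"
  shows "(symmetric_on ip DS B \<longrightarrow>
            (\<forall>t\<ge>1 / sqrt \<epsilon>. \<forall>\<xi>\<in>Yset DS.
               Ynorm ip S (Tp t \<xi>) \<le> exp 1 * sqrt \<epsilon> * t * exp (0 * t) * Ynorm ip S \<xi> \<and>
               Ynorm ip S (Tm t \<xi>) \<le> exp 1 * sqrt \<epsilon> * t * exp (0 * t) * Ynorm ip S \<xi>)) \<and>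
         (bounded_on ip DS B \<longrightarrow>
            (\<forall>t\<ge>1 / sqrt \<epsilon>. \<forall>\<xi>\<in>Yset DS.
               Ynorm ip S (Tp t \<xi>) \<le> exp 1 * sqrt \<epsilon> * t * exp (op_norm ip DS B * t) * Ynorm ip S \<xi> \<and>
               Ynorm ip S (Tm t \<xi>) \<le> exp 1 * sqrt \<epsilon> * t * exp (op_norm ip DS B * t) * Ynorm ip S \<xi>))"
proof -
  have st: "setting sm ip DA A DS S \<epsilon>"
    by (rule setting.intro[OF hilb eps_pos A_sa A_lower sqrtA])
  interpret st: setting sm ip DA A DS S \<epsilon> by (rule st)
  have cp: "- \<i> = \<i> \<or> - \<i> = - \<i>" by simp
  have cm: "\<i> = \<i> \<or> \<i> = - \<i>" by simp
  have part1: "symmetric_on ip DS B \<longrightarrow>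
            (\<forall>t\<ge>1 / sqrt \<epsilon>. \<forall>\<xi>\<in>Yset DS.
               Ynorm ip S (Tp t \<xi>) \<le> exp 1 * sqrt \<epsilon> * t * exp (0 * t) * Ynorm ip S \<xi> \<and>
               Ynorm ip S (Tm t \<xi>) \<le> exp 1 * sqrt \<epsilon> * t * exp (0 * t) * Ynorm ip S \<xi>)"
  proof (intro impI allI ballI impI conjI)
    assume sym: "symmetric_on ip DS B"
    interpret gp: sg sm ip DA A DS S \<epsilon> B "- \<i>" Tp 0
      by (rule sg.intro[OF st sg_axioms.intro[OF B_lin cp Tp_gen _ st.sym_Re[OF sym cp]]]) simp
    interpret gm: sg sm ip DA A DS S \<epsilon> B \<i> Tm 0
      by (rule sg.intro[OF st sg_axioms.intro[OF B_lin cm Tm_gen _ st.sym_Re[OF sym cm]]]) simp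
    fix t \<xi> assume t: "1 / sqrt \<epsilon> \<le> t" and x: "\<xi> \<in> Yset DS"
    show "Ynorm ip S (Tp t \<xi>) \<le> exp 1 * sqrt \<epsilon> * t * exp (0 * t) * Ynorm ip S \<xi>"
      by (rule gp.main_bound[OF x t])
    show "Ynorm ip S (Tm t \<xi>) \<le> exp 1 * sqrt \<epsilon> * t * exp (0 * t) * Ynorm ip S \<xi>"
      by (rule gm.main_bound[OF x t])
  qed
  have part2: "bounded_on ip DS B \<longrightarrow>
            (\<forall>t\<ge>1 / sqrt \<epsilon>. \<forall>\<xi>\<in>Yset DS.
               Ynorm ip S (Tp t \<xi>) \<le> exp 1 * sqrt \<epsilon> * t * exp (op_norm ip DS B * t) * Ynorm ip S \<xi> \<and>
               Ynorm ip S (Tm t \<xi>) \<le> exp 1 * sqrt \<epsilon> * t * exp (op_norm ip DS B * t) * Ynorm ip S \<xi>)"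
  proof (intro impI allI ballI impI conjI)
    assume bd: "bounded_on ip DS B"
    have mu: "0 \<le> op_norm ip DS B" by (rule st.opn_facts(1)[OF bd B_lin])
    interpret gp: sg sm ip DA A DS S \<epsilon> B "- \<i>" Tp "op_norm ip DS B"
      by (rule sg.intro[OF st sg_axioms.intro[OF B_lin cp Tp_gen mu st.bdd_Re[OF bd B_lin cp]]])
    interpret gm: sg sm ip DA A DS S \<epsilon> B \<i> Tm "op_norm ip DS B"
      by (rule sg.intro[OF st sg_axioms.intro[OF B_lin cm Tm_gen mu st.bdd_Re[OF bd B_lin cm]]])
    fix t \<xi> assume t: "1 / sqrt \<epsilon> \<le> t" and x: "\<xi> \<in> Yset DS"
    show "Ynorm ip S (Tp t \<xi>) \<le> exp 1 * sqrt \<epsilon> * t * exp (op_norm ip DS B * t) * Ynorm ip S \<xi>"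
      by (rule gp.main_bound[OF x t])
    show "Ynorm ip S (Tm t \<xi>) \<le> exp 1 * sqrt \<epsilon> * t * exp (op_norm ip DS B * t) * Ynorm ip S \<xi>"
      by (rule gm.main_bound[OF x t])
  qed
  show ?thesis using part1 part2 by blast
qed


end
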